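(* Let $R$ be a ring with $1=1_R$ and let $p\le q$ be a $1$-balanced lattice inequality in the variables $x_1,\dots,x_n$. Then the following are equivalent: (α1) for every unital left $R$-module $M$ and all $B_1,\dots,B_n\in\mathrm{Sub}\,M$, $p(B_1,\dots,B_n)\subseteq q(B_1,\dots,B_n)$; (α2) the paired-bipolar-graphs problem $\mathrm{Problem}(G_p,G_q,\phi,\psi,(R,+),1_R)$ with $\phi(i)=\xi_p(x_i)$ and $\psi(i)=\xi_q(x_i)$ has a solution.
   Context: $p\le q$ is $1$-balanced if every variable occurring in it occurs exactly once in $p$ and exactly once in $q$ (so $p$, $q$ are repetition-free in the same variables). For a repetition-free term $r$, the bipolar digraph $G_r$ (source $s_{G_r}$, sink $t_{G_r}$) and bijection $\xi_r$ from the variables of $r$ onto $E(G_r)$ are defined inductively: for a variable $x$, two vertices and one edge $\xi_r(x)$ from source to sink; for $r=r_1\vee r_2$, identify $t_{G_{r_1}}$ with $s_{G_{r_2}}$ (series composition, $s_{G_r}=s_{G_{r_1}}$, $t_{G_r}=t_{G_{r_2}}$); for $r=r_1\wedge r_2$, identify the two sources and the two sinks (parallel composition); $\xi_r=\xi_{r_1}\cup\xi_{r_2}$. Paired-bipolar-graphs problem $\mathrm{Problem}(G,H,\phi,\psi,\mathbf A,b)$: $G,H$ bipolar digraphs (acyclic, unique source and sink, at least two vertices) with $n$ edges, bijections $\phi\colon\{1,\dots,n\}\to E(G)$, $\psi\colon\{1,\dots,n\}\to E(H)$, $e_i=\phi(i)$, $e'_i=\psi(i)$, Abelian group $\mathbf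 A=(A;+)$, $b\in A$. For $\vec a\in A^n$, $X\subseteq\{1,\dots,n\}$, $\mathrm{Eff}_{\vec a}(X)(v)=\sum_{i\in X,\,h(e_i)=v}a_i-\sum_{i\in X,\,t(e_i)=v}a_i$ for $v\in V(G)$; $\mathrm{Tr}_b(s_G)=-b$, $\mathrm{Tr}_b(t_G)=b$, $\mathrm{Tr}_b(v)=0$ otherwise. $\vec a$ is a solution if $\mathrm{Eff}_{\vec a}(X)=\mathrm{Tr}_b$ for every $X$ such that $\{e'_j:j\in X\}$ is the edge set of a maximal directed path in $H$. *)

theory Defs
  imports Main "HOL-Library.Sublist"
begin

datatype lterm = Var nat | Join lterm lterm | Meet lterm lterm

fun vars :: "lterm \<Rightarrow> nat list" where
  "vars (Var x) = [x]"
| "vars (Join r1 r2) = vars r1 @ vars r2"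
| "vars (Meet r1 r2) = vars r1 @ vars r2"

definition balanced_in :: "lterm \<Rightarrow> lterm \<Rightarrow> nat \<Rightarrow> bool" where
  "balanced_in p q n \<longleftrightarrow>
     distinct (vars p) \<and> set (vars p) = {1..n} \<and>
     distinct (vars q) \<and> set (vars q) = {1..n}"

definition left_module ::
  "'m set \<Rightarrow> ('m \<Rightarrow> 'm \<Rightarrow> 'm) \<Rightarrow> 'm \<Rightarrow> ('a::ring_1 \<Rightarrow> 'm \<Rightarrow> 'm) \<Rightarrow> bool" where
  "left_module M add z sm \<longleftrightarrow>
     z \<in> M \<and>
     (\<forall>x\<in>M. \<forall>y\<in>M. add x y \<in> M) \<and>
     (\<forall>r. \<forall>x\<in>M. sm r x \<in> M) \<and>
     (\<forall>x\<in>M. \<forall>y\<in>M. \<forall>w\<in>M. add (add x y) w = add x (add y w)) \<and>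
     (\<forall>x\<in>M. \<forall>y\<in>M. add x y = add y x) \<and>
     (\<forall>x\<in>M. add z x = x) \<and>
     (\<forall>x\<in>M. \<exists>y\<in>M. add x y = z) \<and>
     (\<forall>r. \<forall>x\<in>M. \<forall>y\<in>M. sm r (add x y) = add (sm r x) (sm r y)) \<and>
     (\<forall>r s. \<forall>x\<in>M. sm (r + s) x = add (sm r x) (sm s x)) \<and>
     (\<forall>r s. \<forall>x\<in>M. sm (r * s) x = sm r (sm s x)) \<and>
     (\<forall>x\<in>M. sm 1 x = x)"

definition submodule ::
  "'m set \<Rightarrow> ('m \<Rightarrow> 'm \<Rightarrow> 'm) \<Rightarrow> 'm \<Rightarrow> ('a::ring_1 \<Rightarrow> 'm \<Rightarrow> 'm) \<Rightarrow> 'm set \<Rightarrow> bool" where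
  "submodule M add z sm S \<longleftrightarrow>
     S \<subseteq> M \<and> z \<in> S \<and>
     (\<forall>x\<in>S. \<forall>y\<in>S. add x y \<in> S) \<and>
     (\<forall>r. \<forall>x\<in>S. sm r x \<in> S)"

fun lev :: "('m \<Rightarrow> 'm \<Rightarrow> 'm) \<Rightarrow> (nat \<Rightarrow> 'm set) \<Rightarrow> lterm \<Rightarrow> 'm set" where
  "lev add B (Var i) = B i"
| "lev add B (Join r1 r2) = {add x y | x y. x \<in> lev add B r1 \<and> y \<in> lev add B r2}"
| "lev add B (Meet r1 r2) = lev add B r1 \<inter> lev add B r2"

definition holds_in_module ::
  "lterm \<Rightarrow> lterm \<Rightarrow> nat \<Rightarrow> 'm set \<Rightarrow> ('m \<Rightarrow> 'm \<Rightarrow> 'm) \<Rightarrow> 'm \<Rightarrow> ('a::ring_1 \<Rightarrow> 'm \<Rightarrow> 'm) \<Rightarrow> bool" where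
  "holds_in_module p q n M add z sm \<longleftrightarrow>
     (\<forall>B. (\<forall>i\<in>{1..n}. submodule M add z sm (B i)) \<longrightarrow> lev add B p \<subseteq> lev add B q)"

text \<open>bld r s t f builds G_r between given source s and sink t, using fresh vertex
  names from f on; it returns the edge list (x, tail, head), where the edge labelled x is
  xi_r(x), and the next fresh vertex.\<close>
fun bld :: "lterm \<Rightarrow> nat \<Rightarrow> nat \<Rightarrow> nat \<Rightarrow> (nat \<times> nat \<times> nat) list \<times> nat" where
  "bld (Var x) s t f = ([(x, s, t)], f)"
| "bld (Join r1 r2) s t f =
     (let (E1, f1) = bld r1 s f (Suc f); (E2, f2) = bld r2 f t f1 in (E1 @ E2, f2))"
| "bld (Meet r1 r2) s t f =
     (let (E1, f1) = bld r1 s t f; (E2, f2) = bld r2 s t f1 in (E1 @ E2, f2))"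

text \<open>G_r: vertices {0..<gnv r}, source 0, sink 1.\<close>
definition gnv :: "lterm \<Rightarrow> nat" where
  "gnv r = snd (bld r 0 1 2)"

definition gsrc :: nat where "gsrc = 0"
definition gsnk :: nat where "gsnk = 1"

definition etail :: "lterm \<Rightarrow> nat \<Rightarrow> nat" where
  "etail r x = fst (the (map_of (fst (bld r 0 1 2)) x))"

definition ehead :: "lterm \<Rightarrow> nat \<Rightarrow> nat" where
  "ehead r x = snd (the (map_of (fst (bld r 0 1 2)) x))"

text \<open>Directed paths in G_r, as nonempty lists of edges (named by their variables).\<close>
definition dpath :: "lterm \<Rightarrow> nat list \<Rightarrow> bool" where
  "dpath r es \<longleftrightarrow> es \<noteq> [] \<and> set es \<subseteq> set (vars r) \<and> distinct es \<and>
     (\<forall>k. Suc k < length es \<longrightarrow> ehead r (es ! k) = etail r (es ! Suc k)) \<and>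
     distinct (etail r (hd es) # map (ehead r) es)"

definition maxpath :: "lterm \<Rightarrow> nat list \<Rightarrow> bool" where
  "maxpath r es \<longleftrightarrow> dpath r es \<and> \<not> (\<exists>es'. dpath r es' \<and> sublist es es' \<and> es' \<noteq> es)"

definition Eff :: "lterm \<Rightarrow> (nat \<Rightarrow> 'a::ab_group_add) \<Rightarrow> nat set \<Rightarrow> nat \<Rightarrow> 'a" where
  "Eff p a X v = (\<Sum>i\<in>{i\<in>X. ehead p i = v}. a i) - (\<Sum>i\<in>{i\<in>X. etail p i = v}. a i)"

definition Tr :: "'a::ab_group_add \<Rightarrow> nat \<Rightarrow> 'a" where
  "Tr b v = (if v = gsrc then - b else if v = gsnk then b else 0)"

definition is_solution :: "lterm \<Rightarrow> lterm \<Rightarrow> 'a::ab_group_add \<Rightarrow> (nat \<Rightarrow> 'a) \<Rightarrow> bool" where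
  "is_solution p q b a \<longleftrightarrow>
     (\<forall>X. (\<exists>es. maxpath q es \<and> set es = X) \<longrightarrow>
        (\<forall>v < gnv p. Eff p a X v = Tr b v))"

definition problem_solvable :: "lterm \<Rightarrow> lterm \<Rightarrow> 'a::ab_group_add \<Rightarrow> bool" where
  "problem_solvable p q b \<longleftrightarrow> (\<exists>a. is_solution p q b a)"

end

theory Submission
  imports Defs
begin

lemma bld_Join: "bld (Join r1 r2) s t f =
   (fst (bld r1 s f (Suc f)) @ fst (bld r2 f t (snd (bld r1 s f (Suc f)))),
    snd (bld r2 f t (snd (bld r1 s f (Suc f)))))"
  by (simp add: split_beta Let_def)

lemma bld_Meet: "bld (Meet r1 r2) s t f =
   (fst (bld r1 s t f) @ fst (bld r2 s t (snd (bld r1 s t f))),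
    snd (bld r2 s t (snd (bld r1 s t f))))"
  by (simp add: split_beta Let_def)

declare bld.simps(2,3)[simp del]

lemma bld_mono: "f \<le> snd (bld r s t f)"
proof (induction r arbitrary: s t f)
  case (Var x) then show ?case by simp
next
  case (Join r1 r2)
  have "Suc f \<le> snd (bld r1 s f (Suc f))" by (rule Join.IH(1))
  moreover have "snd (bld r1 s f (Suc f)) \<le> snd (bld r2 f t (snd (bld r1 s f (Suc f))))" by (rule Join.IH(2))
  ultimately show ?case by (simp add: bld_Join)
next
  case (Meet r1 r2)
  have "f \<le> snd (bld r1 s t f)" by (rule Meet.IH(1))
  moreover have "snd (bld r1 s t f) \<le> snd (bld r2 s t (snd (bld r1 s t f)))" by (rule Meet.IH(2))
  ultimately show ?case by (simp add: bld_Meet)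
qed

lemma bld_fst: "map fst (fst (bld r s t f)) = vars r"
  by (induction r arbitrary: s t f) (auto simp: bld_Join bld_Meet)

lemma bld_ends: "(x,a,b) \<in> set (fst (bld r s t f)) \<Longrightarrow>
   (a = s \<or> f \<le> a \<and> a < snd (bld r s t f)) \<and> (b = t \<or> f \<le> b \<and> b < snd (bld r s t f))"
proof (induction r arbitrary: s t f)
  case (Var x) then show ?case by simp
next
  case (Join r1 r2)
  have m1: "Suc f \<le> snd (bld r1 s f (Suc f))" by (rule bld_mono)
  have m2: "snd (bld r1 s f (Suc f)) \<le> snd (bld r2 f t (snd (bld r1 s f (Suc f))))" by (rule bld_mono)
  from Join.prems consider "(x,a,b) \<in> set (fst (bld r1 s f (Suc f)))"
    | "(x,a,b) \<in> set (fst (bld r2 f t (snd (bld r1 s f (Suc f)))))"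
    by (auto simp: bld_Join)
  then show ?case
  proof cases
    case 1 from Join.IH(1)[OF 1] m1 m2 show ?thesis by (simp add: bld_Join) linarith
  next
    case 2 from Join.IH(2)[OF 2] m1 m2 show ?thesis by (simp add: bld_Join) linarith
  qed
next
  case (Meet r1 r2)
  have m1: "f \<le> snd (bld r1 s t f)" by (rule bld_mono)
  have m2: "snd (bld r1 s t f) \<le> snd (bld r2 s t (snd (bld r1 s t f)))" by (rule bld_mono)
  from Meet.prems consider "(x,a,b) \<in> set (fst (bld r1 s t f))"
    | "(x,a,b) \<in> set (fst (bld r2 s t (snd (bld r1 s t f))))"
    by (auto simp: bld_Meet)
  then show ?case
  proof cases
    case 1 from Meet.IH(1)[OF 1] m1 m2 show ?thesis by (simp add: bld_Meet) linarith
  next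
    case 2 from Meet.IH(2)[OF 2] m1 m2 show ?thesis by (simp add: bld_Meet) linarith
  qed
qed

definition consis :: "(nat \<Rightarrow> nat) \<Rightarrow> (nat \<Rightarrow> nat) \<Rightarrow> lterm \<Rightarrow> nat \<Rightarrow> nat \<Rightarrow> nat \<Rightarrow> bool" where
  "consis H T r s t f \<longleftrightarrow> (\<forall>(x,a,b)\<in>set (fst (bld r s t f)). T x = a \<and> H x = b)"

lemma consis_Var: "consis H T (Var x) s t f \<longleftrightarrow> T x = s \<and> H x = t"
  by (simp add: consis_def)

lemma consis_Join: "consis H T (Join r1 r2) s t f \<longleftrightarrow>
   consis H T r1 s f (Suc f) \<and> consis H T r2 f t (snd (bld r1 s f (Suc f)))"
  unfolding consis_def bld_Join by (auto simp: Ball_def split: prod.splits)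

lemma consis_Meet: "consis H T (Meet r1 r2) s t f \<longleftrightarrow>
   consis H T r1 s t f \<and> consis H T r2 s t (snd (bld r1 s t f))"
  unfolding consis_def bld_Meet by (auto simp: Ball_def split: prod.splits)

lemma ends: "consis H T r s t f \<Longrightarrow> x \<in> set (vars r) \<Longrightarrow>
   (T x = s \<or> f \<le> T x \<and> T x < snd (bld r s t f)) \<and> (H x = t \<or> f \<le> H x \<and> H x < snd (bld r s t f))"
proof -
  assume c: "consis H T r s t f" and x: "x \<in> set (vars r)"
  from x have "x \<in> set (map fst (fst (bld r s t f)))" by (simp add: bld_fst)
  then obtain a b where ab: "(x,a,b) \<in> set (fst (bld r s t f))" by auto
  with c have "T x = a \<and> H x = b" by (auto simp: consis_def)
  with bld_ends[OF ab] show ?thesis by simp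
qed

fun wk :: "(nat\<Rightarrow>nat) \<Rightarrow> (nat\<Rightarrow>nat) \<Rightarrow> nat \<Rightarrow> nat \<Rightarrow> nat list \<Rightarrow> bool" where
  "wk T H u v [] = (u = v)"
| "wk T H u v (e#es) = (T e = u \<and> wk T H (H e) v es)"

lemma wk_append: "wk T H u v (xs@ys) \<longleftrightarrow> (\<exists>w. wk T H u w xs \<and> wk T H w v ys)"
  by (induction xs arbitrary: u) auto

lemma wk_end: "wk T H u v es \<Longrightarrow> es \<noteq> [] \<Longrightarrow> v = H (last es)"
proof (induction es arbitrary: u)
  case (Cons e es) then show ?case by (cases es) auto
qed simp

lemma wk_start: "wk T H u v es \<Longrightarrow> es \<noteq> [] \<Longrightarrow> u = T (hd es)"
  by (cases es) auto

lemma wk_closed: "wk T H u v es \<Longrightarrow> set es \<subseteq> Ea \<union> Eb \<Longrightarrow> u \<in> W \<Longrightarrow>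
   \<forall>e\<in>Ea. H e \<in> W \<Longrightarrow> \<forall>e\<in>Eb. T e \<notin> W \<Longrightarrow> set es \<subseteq> Ea"
  by (induction es arbitrary: u) auto

lemma wk_split: "wk T H u v es \<Longrightarrow> set es \<subseteq> Va \<union> Vb \<Longrightarrow> u \<in> Wa \<Longrightarrow>
   \<forall>e\<in>Va. H e = m \<or> H e \<in> Wa \<Longrightarrow> \<forall>e\<in>Vb. T e \<notin> Wa \<Longrightarrow>
   set es \<subseteq> Va \<or> (\<exists>es1 es2. es = es1 @ es2 \<and> wk T H u m es1 \<and> set es1 \<subseteq> Va \<and> wk T H m v es2)"
proof (induction es arbitrary: u)
  case Nil then show ?case by simp
next
  case (Cons e es)
  then have eVa: "e \<in> Va" and Te: "T e = u" by auto
  show ?case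
  proof (cases "H e = m")
    case True
    then show ?thesis using Cons.prems eVa
      by (intro disjI2 exI[of _ "[e]"] exI[of _ es]) auto
  next
    case False
    with eVa Cons.prems have "H e \<in> Wa" by auto
    with Cons.IH[of "H e"] Cons.prems have "set es \<subseteq> Va \<or> (\<exists>es1 es2. es = es1 @ es2 \<and> wk T H (H e) m es1 \<and> set es1 \<subseteq> Va \<and> wk T H m v es2)"
      by auto
    then show ?thesis
    proof
      assume "set es \<subseteq> Va" with eVa show ?thesis by simp
    next
      assume "\<exists>es1 es2. es = es1 @ es2 \<and> wk T H (H e) m es1 \<and> set es1 \<subseteq> Va \<and> wk T H m v es2"
      then obtain es1 es2 where "es = es1 @ es2" "wk T H (H e) m es1" "set es1 \<subseteq> Va" "wk T H m v es2" by blast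
      with eVa Te show ?thesis by (intro disjI2 exI[of _ "e#es1"] exI[of _ es2]) auto
    qed
  qed
qed


fun spaths :: "lterm \<Rightarrow> nat set set" where
  "spaths (Var x) = {{x}}"
| "spaths (Join r1 r2) = {A \<union> B | A B. A \<in> spaths r1 \<and> B \<in> spaths r2}"
| "spaths (Meet r1 r2) = spaths r1 \<union> spaths r2"

lemma spaths_sub: "A \<in> spaths r \<Longrightarrow> A \<subseteq> set (vars r)"
  by (induction r arbitrary: A) auto

lemma spaths_ne: "spaths r \<noteq> {}"
  by (induction r) auto

lemma sp_walk: "consis H T r s t f \<Longrightarrow> A \<in> spaths r \<Longrightarrow>
   \<exists>es. wk T H s t es \<and> set es = A \<and> set es \<subseteq> set (vars r)"
proof (induction r arbitrary: s t f A)
  case (Var x) then show ?case by (intro exI[of _ "[x]"]) (auto simp: consis_Var)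
next
  case (Join r1 r2)
  from Join.prems obtain A1 A2 where A: "A = A1 \<union> A2" "A1 \<in> spaths r1" "A2 \<in> spaths r2" by auto
  have c1: "consis H T r1 s f (Suc f)" and c2: "consis H T r2 f t (snd (bld r1 s f (Suc f)))"
    using Join.prems(1) by (auto simp: consis_Join)
  from Join.IH(1)[OF c1 A(2)] obtain es1 where 1: "wk T H s f es1" "set es1 = A1" "set es1 \<subseteq> set (vars r1)"
    by blast
  from Join.IH(2)[OF c2 A(3)] obtain es2 where 2: "wk T H f t es2" "set es2 = A2" "set es2 \<subseteq> set (vars r2)"
    by blast
  show ?case using 1 2 A by (intro exI[of _ "es1@es2"]) (auto simp: wk_append)
next
  case (Meet r1 r2)
  from Meet.prems(2) consider "A \<in> spaths r1" | "A \<in> spaths r2" by auto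
  then show ?case
  proof cases
    case 1 with Meet.IH(1)[OF _ 1] Meet.prems show ?thesis by (fastforce simp: consis_Meet)
  next
    case 2 with Meet.IH(2)[OF _ 2] Meet.prems show ?thesis by (fastforce simp: consis_Meet)
  qed
qed

lemma walk_sp: "consis H T r s t f \<Longrightarrow> s < f \<Longrightarrow> t < f \<Longrightarrow> s \<noteq> t \<Longrightarrow>
   wk T H s t es \<Longrightarrow> set es \<subseteq> set (vars r) \<Longrightarrow> set es \<in> spaths r \<and> distinct (s # map H es)"
proof (induction r arbitrary: s t f es)
  case (Var x)
  then obtain e es' where es: "es = e # es'" by (cases es) auto
  with Var have e: "e = x" "T x = s" "H x = t" by (auto simp: consis_Var)
  have "es' = []"
  proof (rule ccontr)
    assume "es' \<noteq> []"
    then obtain e' es'' where "es' = e' # es''" by (cases es') auto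
    with Var.prems es e show False by auto
  qed
  with es e Var.prems show ?case by auto
next
  case (Meet r1 r2)
  define f1 where "f1 = snd (bld r1 s t f)"
  define f2 where "f2 = snd (bld r2 s t f1)"
  have c1: "consis H T r1 s t f" and c2: "consis H T r2 s t f1"
    using Meet.prems(1) by (auto simp: consis_Meet f1_def)
  have m1: "f \<le> f1" unfolding f1_def by (rule bld_mono)
  note e1 = ends[OF c1, folded f1_def] and e2 = ends[OF c2, folded f2_def]
  from Meet.prems obtain e es' where es: "es = e # es'" by (cases es) auto
  with Meet.prems have Te: "T e = s" and w': "wk T H (H e) t es'" by auto
  from es Meet.prems have eV: "e \<in> set (vars r1) \<or> e \<in> set (vars r2)" by auto
  then show ?case
  proof
    assume eV1: "e \<in> set (vars r1)"
    have "set es' \<subseteq> set (vars r1)"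
    proof (rule wk_closed[OF w', where Eb = "set (vars r2)" and W = "{t} \<union> {f..<f1}"])
      show "set es' \<subseteq> set (vars r1) \<union> set (vars r2)" using Meet.prems es by auto
      show "H e \<in> {t} \<union> {f..<f1}" using e1[OF eV1] by auto
      show "\<forall>e\<in>set (vars r1). H e \<in> {t} \<union> {f..<f1}" using e1 by auto
      show "\<forall>e\<in>set (vars r2). T e \<notin> {t} \<union> {f..<f1}"
      proof
        fix y assume "y \<in> set (vars r2)"
        from e2[OF this] Meet.prems m1 show "T y \<notin> {t} \<union> {f..<f1}" by auto
      qed
    qed
    with eV1 es have "set es \<subseteq> set (vars r1)" by auto
    from Meet.IH(1)[OF c1 Meet.prems(2-5) this] show ?thesis by simp
  next
    assume eV2: "e \<in> set (vars r2)"
    have "set es' \<subseteq> set (vars r2)"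
    proof (rule wk_closed[OF w', where Eb = "set (vars r1)" and W = "{t} \<union> {f1..<f2}"])
      show "set es' \<subseteq> set (vars r2) \<union> set (vars r1)" using Meet.prems es by auto
      show "H e \<in> {t} \<union> {f1..<f2}" using e2[OF eV2] by auto
      show "\<forall>e\<in>set (vars r2). H e \<in> {t} \<union> {f1..<f2}" using e2 by auto
      show "\<forall>e\<in>set (vars r1). T e \<notin> {t} \<union> {f1..<f2}"
      proof
        fix y assume "y \<in> set (vars r1)"
        from e1[OF this] Meet.prems m1 show "T y \<notin> {t} \<union> {f1..<f2}" by auto
      qed
    qed
    with eV2 es have "set es \<subseteq> set (vars r2)" by auto
    from Meet.IH(2)[OF c2 _ _ Meet.prems(4-5) this] Meet.prems m1 show ?thesis by simp
  qed
next
  case (Join r1 r2)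
  define f1 where "f1 = snd (bld r1 s f (Suc f))"
  define f2 where "f2 = snd (bld r2 f t f1)"
  have c1: "consis H T r1 s f (Suc f)" and c2: "consis H T r2 f t f1"
    using Join.prems(1) by (auto simp: consis_Join f1_def)
  have m1: "Suc f \<le> f1" unfolding f1_def by (rule bld_mono)
  note e1 = ends[OF c1, folded f1_def] and e2 = ends[OF c2, folded f2_def]
  have "set es \<subseteq> set (vars r1) \<or> (\<exists>es1 es2. es = es1 @ es2 \<and> wk T H s f es1 \<and> set es1 \<subseteq> set (vars r1) \<and> wk T H f t es2)"
  proof (rule wk_split[where Vb = "set (vars r2)" and Wa = "{s} \<union> {Suc f..<f1}", OF Join.prems(5)])
    show "set es \<subseteq> set (vars r1) \<union> set (vars r2)" using Join.prems by auto
    show "s \<in> {s} \<union> {Suc f..<f1}" by auto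
    show "\<forall>e\<in>set (vars r1). H e = f \<or> H e \<in> {s} \<union> {Suc f..<f1}"
    proof
      fix y assume "y \<in> set (vars r1)"
      from e1[OF this] show "H y = f \<or> H y \<in> {s} \<union> {Suc f..<f1}" by auto
    qed
    show "\<forall>e\<in>set (vars r2). T e \<notin> {s} \<union> {Suc f..<f1}"
    proof
      fix y assume "y \<in> set (vars r2)"
      from e2[OF this] Join.prems m1 show "T y \<notin> {s} \<union> {Suc f..<f1}" by auto
    qed
  qed
  then show ?case
  proof
    assume a: "set es \<subseteq> set (vars r1)"
    have False
    proof (cases "es = []")
      case True with Join.prems show False by simp
    next
      case False
      with Join.prems(5) have "t = H (last es)" by (rule wk_end)
      moreover have "last es \<in> set (vars r1)" using a False by auto
      ultimately show False using e1 Join.prems by fastforce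
    qed
    then show ?thesis ..
  next
    assume "\<exists>es1 es2. es = es1 @ es2 \<and> wk T H s f es1 \<and> set es1 \<subseteq> set (vars r1) \<and> wk T H f t es2"
    then obtain es1 es2 where es: "es = es1 @ es2" and w1: "wk T H s f es1" and s1: "set es1 \<subseteq> set (vars r1)"
      and w2: "wk T H f t es2" by blast
    have s2: "set es2 \<subseteq> set (vars r2)"
    proof (rule wk_closed[where Eb = "set (vars r1)" and W = "{f, t} \<union> {f1..<f2}", OF w2])
      show "set es2 \<subseteq> set (vars r2) \<union> set (vars r1)" using Join.prems es by auto
      show "f \<in> {f, t} \<union> {f1..<f2}" by auto
      show "\<forall>e\<in>set (vars r2). H e \<in> {f, t} \<union> {f1..<f2}"
      proof
        fix y assume "y \<in> set (vars r2)"
        from e2[OF this] show "H y \<in> {f, t} \<union> {f1..<f2}" by auto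
      qed
      show "\<forall>e\<in>set (vars r1). T e \<notin> {f, t} \<union> {f1..<f2}"
      proof
        fix y assume "y \<in> set (vars r1)"
        from e1[OF this] Join.prems m1 show "T y \<notin> {f, t} \<union> {f1..<f2}" by auto
      qed
    qed
    from Join.IH(1)[OF c1 _ _ _ w1 s1] Join.prems have i1: "set es1 \<in> spaths r1" "distinct (s # map H es1)" by auto
    from Join.IH(2)[OF c2 _ _ _ w2 s2] Join.prems m1 have i2: "set es2 \<in> spaths r2" "distinct (f # map H es2)" by auto
    have hs1: "set (s # map H es1) \<subseteq> {s, f} \<union> {Suc f..<f1}" using s1 e1 by fastforce
    have hs2: "set (map H es2) \<subseteq> {t} \<union> {f1..<f2}" using s2 e2 by fastforce
    have "set (s # map H es1) \<inter> set (map H es2) = {}" using hs1 hs2 Join.prems m1 by fastforce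
    then have "distinct (s # map H es)" using i1 i2 es by auto
    moreover have "set es \<in> spaths (Join r1 r2)" using i1 i2 es by auto
    ultimately show ?thesis by simp
  qed
qed


lemma walk_exists: "consis H T r s t f \<Longrightarrow> \<exists>es. wk T H s t es \<and> set es \<subseteq> set (vars r)"
  using sp_walk spaths_ne by (metis all_not_in_conv)

lemma infix_walk: "consis H T r s t f \<Longrightarrow> s < f \<Longrightarrow> t < f \<Longrightarrow> s \<noteq> t \<Longrightarrow>
   wk T H u v c \<Longrightarrow> c \<noteq> [] \<Longrightarrow> set c \<subseteq> set (vars r) \<Longrightarrow>
   \<exists>x y. wk T H s t (x @ c @ y) \<and> set x \<subseteq> set (vars r) \<and> set y \<subseteq> set (vars r)"
proof (induction r arbitrary: s t f u v c)
  case (Var x)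
  then obtain e es' where es: "c = e # es'" by (cases c) auto
  with Var have e: "e = x" "T x = s" "H x = t" by (auto simp: consis_Var)
  have "es' = []"
  proof (rule ccontr)
    assume "es' \<noteq> []"
    then obtain e' es'' where "es' = e' # es''" by (cases es') auto
    with Var.prems es e show False by auto
  qed
  with es e Var.prems show ?case by (intro exI[of _ "[]"]) auto
next
  case (Meet r1 r2)
  define f1 where "f1 = snd (bld r1 s t f)"
  define f2 where "f2 = snd (bld r2 s t f1)"
  have c1: "consis H T r1 s t f" and c2: "consis H T r2 s t f1"
    using Meet.prems(1) by (auto simp: consis_Meet f1_def)
  have m1: "f \<le> f1" unfolding f1_def by (rule bld_mono)
  note e1 = ends[OF c1, folded f1_def] and e2 = ends[OF c2, folded f2_def]
  from Meet.prems obtain e es' where es: "c = e # es'" by (cases c) auto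
  with Meet.prems have w': "wk T H (H e) v es'" by auto
  from es Meet.prems have eV: "e \<in> set (vars r1) \<or> e \<in> set (vars r2)" by auto
  then show ?case
  proof
    assume eV1: "e \<in> set (vars r1)"
    have "set es' \<subseteq> set (vars r1)"
    proof (rule wk_closed[OF w', where Eb = "set (vars r2)" and W = "{t} \<union> {f..<f1}"])
      show "set es' \<subseteq> set (vars r1) \<union> set (vars r2)" using Meet.prems es by auto
      show "H e \<in> {t} \<union> {f..<f1}" using e1[OF eV1] by auto
      show "\<forall>e\<in>set (vars r1). H e \<in> {t} \<union> {f..<f1}" using e1 by auto
      show "\<forall>e\<in>set (vars r2). T e \<notin> {t} \<union> {f..<f1}"
      proof
        fix y assume "y \<in> set (vars r2)"
        from e2[OF this] Meet.prems m1 show "T y \<notin> {t} \<union> {f..<f1}" by auto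
      qed
    qed
    with eV1 es have "set c \<subseteq> set (vars r1)" by auto
    from Meet.IH(1)[OF c1 Meet.prems(2-6) this] show ?thesis by auto
  next
    assume eV2: "e \<in> set (vars r2)"
    have "set es' \<subseteq> set (vars r2)"
    proof (rule wk_closed[OF w', where Eb = "set (vars r1)" and W = "{t} \<union> {f1..<f2}"])
      show "set es' \<subseteq> set (vars r2) \<union> set (vars r1)" using Meet.prems es by auto
      show "H e \<in> {t} \<union> {f1..<f2}" using e2[OF eV2] by auto
      show "\<forall>e\<in>set (vars r2). H e \<in> {t} \<union> {f1..<f2}" using e2 by auto
      show "\<forall>e\<in>set (vars r1). T e \<notin> {t} \<union> {f1..<f2}"
      proof
        fix y assume "y \<in> set (vars r1)"
        from e1[OF this] Meet.prems m1 show "T y \<notin> {t} \<union> {f1..<f2}" by auto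
      qed
    qed
    with eV2 es have "set c \<subseteq> set (vars r2)" by auto
    from Meet.IH(2)[OF c2 _ _ Meet.prems(4-6) this] Meet.prems m1 obtain x y where
      "wk T H s t (x @ c @ y)" "set x \<subseteq> set (vars r2)" "set y \<subseteq> set (vars r2)" by auto
    then show ?thesis by (intro exI[of _ x] exI[of _ y]) auto
  qed
next
  case (Join r1 r2)
  define f1 where "f1 = snd (bld r1 s f (Suc f))"
  define f2 where "f2 = snd (bld r2 f t f1)"
  have c1: "consis H T r1 s f (Suc f)" and c2: "consis H T r2 f t f1"
    using Join.prems(1) by (auto simp: consis_Join f1_def)
  have m1: "Suc f \<le> f1" unfolding f1_def by (rule bld_mono)
  note e1 = ends[OF c1, folded f1_def] and e2 = ends[OF c2, folded f2_def]
  have T1: "\<forall>y\<in>set (vars r1). T y \<notin> {f, t} \<union> {f1..<f2}"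
  proof
    fix y assume "y \<in> set (vars r1)"
    from e1[OF this] Join.prems m1 show "T y \<notin> {f, t} \<union> {f1..<f2}" by auto
  qed
  have H2: "\<forall>y\<in>set (vars r2). H y \<in> {f, t} \<union> {f1..<f2}"
  proof
    fix y assume "y \<in> set (vars r2)"
    from e2[OF this] show "H y \<in> {f, t} \<union> {f1..<f2}" by auto
  qed
  obtain w1 where w1: "wk T H s f w1" "set w1 \<subseteq> set (vars r1)" using walk_exists[OF c1] by blast
  obtain w2 where w2: "wk T H f t w2" "set w2 \<subseteq> set (vars r2)" using walk_exists[OF c2] by blast
  have case1: ?case if sc: "set c \<subseteq> set (vars r1)"
  proof -
    from Join.IH(1)[OF c1 _ _ _ Join.prems(5,6) sc] Join.prems obtain x y where
      xy: "wk T H s f (x @ c @ y)" "set x \<subseteq> set (vars r1)" "set y \<subseteq> set (vars r1)" by auto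
    show ?thesis using xy w2 by (intro exI[of _ x] exI[of _ "y @ w2"]) (auto simp: wk_append)
  qed
  have case2: ?case if sc: "set c \<subseteq> set (vars r2)"
  proof -
    from Join.IH(2)[OF c2 _ _ _ Join.prems(5,6) sc] Join.prems m1 obtain x y where
      xy: "wk T H f t (x @ c @ y)" "set x \<subseteq> set (vars r2)" "set y \<subseteq> set (vars r2)" by auto
    show ?thesis using xy w1 by (intro exI[of _ "w1 @ x"] exI[of _ y]) (auto simp: wk_append)
  qed
  from Join.prems obtain e es' where es: "c = e # es'" by (cases c) auto
  with Join.prems have w': "wk T H (H e) v es'" and Te: "T e = u" by auto
  from es Join.prems have eV: "e \<in> set (vars r1) \<or> e \<in> set (vars r2)" by auto
  then show ?case
  proof
    assume eV2: "e \<in> set (vars r2)"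
    have "set es' \<subseteq> set (vars r2)"
    proof (rule wk_closed[OF w', where Eb = "set (vars r1)" and W = "{f, t} \<union> {f1..<f2}"])
      show "set es' \<subseteq> set (vars r2) \<union> set (vars r1)" using Join.prems es by auto
      show "H e \<in> {f, t} \<union> {f1..<f2}" using H2 eV2 by auto
    qed (use T1 H2 in auto)
    with eV2 es show ?case using case2 by auto
  next
    assume eV1: "e \<in> set (vars r1)"
    have "set c \<subseteq> set (vars r1) \<or> (\<exists>es1 es2. c = es1 @ es2 \<and> wk T H u f es1 \<and> set es1 \<subseteq> set (vars r1) \<and> wk T H f v es2)"
    proof (rule wk_split[where Vb = "set (vars r2)" and Wa = "{s} \<union> {Suc f..<f1}", OF Join.prems(5)])
      show "set c \<subseteq> set (vars r1) \<union> set (vars r2)" using Join.prems by auto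
      show "u \<in> {s} \<union> {Suc f..<f1}" using e1[OF eV1] Te by auto
      show "\<forall>e\<in>set (vars r1). H e = f \<or> H e \<in> {s} \<union> {Suc f..<f1}"
      proof
        fix y assume "y \<in> set (vars r1)"
        from e1[OF this] show "H y = f \<or> H y \<in> {s} \<union> {Suc f..<f1}" by auto
      qed
      show "\<forall>e\<in>set (vars r2). T e \<notin> {s} \<union> {Suc f..<f1}"
      proof
        fix y assume "y \<in> set (vars r2)"
        from e2[OF this] Join.prems m1 show "T y \<notin> {s} \<union> {Suc f..<f1}" by auto
      qed
    qed
    then show ?case
    proof
      assume "set c \<subseteq> set (vars r1)" then show ?case by (rule case1)
    next
      assume "\<exists>es1 es2. c = es1 @ es2 \<and> wk T H u f es1 \<and> set es1 \<subseteq> set (vars r1) \<and> wk T H f v es2"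
      then obtain c1 c2 where cc: "c = c1 @ c2" and wc1: "wk T H u f c1" and sc1: "set c1 \<subseteq> set (vars r1)"
        and wc2: "wk T H f v c2" by blast
      show ?case
      proof (cases "c2 = []")
        case True with cc sc1 show ?thesis using case1 by auto
      next
        case c2ne: False
        have c1ne: "c1 \<noteq> []"
        proof
          assume "c1 = []"
          with wc1 have "u = f" by simp
          with Te e1[OF eV1] Join.prems(2) show False by auto
        qed
        have sc2: "set c2 \<subseteq> set (vars r2)"
        proof (rule wk_closed[OF wc2, where Eb = "set (vars r1)" and W = "{f, t} \<union> {f1..<f2}"])
          show "set c2 \<subseteq> set (vars r2) \<union> set (vars r1)" using Join.prems cc by auto
        qed (use T1 H2 in auto)
        from Join.IH(1)[OF c1 _ _ _ wc1 c1ne sc1] Join.prems obtain x1 y1 where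
          xy1: "wk T H s f (x1 @ c1 @ y1)" "set x1 \<subseteq> set (vars r1)" "set y1 \<subseteq> set (vars r1)" by auto
        from Join.IH(2)[OF c2 _ _ _ wc2 c2ne sc2] Join.prems m1 obtain x2 y2 where
          xy2: "wk T H f t (x2 @ c2 @ y2)" "set x2 \<subseteq> set (vars r2)" "set y2 \<subseteq> set (vars r2)" by auto
        from xy1(1) obtain a1 a2 where a: "wk T H s a1 x1" "wk T H a1 a2 c1" "wk T H a2 f y1"
          by (auto simp: wk_append)
        have "a2 = f" using wk_end[OF a(2) c1ne] wk_end[OF wc1 c1ne] by simp
        have "y1 = []"
        proof (rule ccontr)
          assume "y1 \<noteq> []"
          then obtain y ys where "y1 = y # ys" by (cases y1) auto
          with a(3) \<open>a2 = f\<close> xy1(3) have "T y = f" "y \<in> set (vars r1)" by auto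
          with T1 show False by auto
        qed
        from xy2(1) obtain b1 b2 where b: "wk T H f b1 x2" "wk T H b1 b2 c2" "wk T H b2 t y2"
          by (auto simp: wk_append)
        have "b1 = f" using wk_start[OF b(2) c2ne] wk_start[OF wc2 c2ne] by simp
        have "x2 = []"
        proof (rule ccontr)
          assume x2ne: "x2 \<noteq> []"
          from wk_end[OF b(1) x2ne] \<open>b1 = f\<close> have "H (last x2) = f" by simp
          moreover have "last x2 \<in> set (vars r2)" using x2ne xy2(2) by auto
          ultimately show False using e2 Join.prems m1 by fastforce
        qed
        have "wk T H s t (x1 @ c @ y2)"
          using a \<open>a2 = f\<close> \<open>y1 = []\<close> \<open>x2 = []\<close> b \<open>b1 = f\<close> cc by (auto simp: wk_append)
        then show ?thesis using xy1 xy2 by (intro exI[of _ x1] exI[of _ y2]) auto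
      qed
    qed
  qed
qed


lemma consis_top: "distinct (vars q) \<Longrightarrow> consis (ehead q) (etail q) q 0 1 2"
  unfolding consis_def
proof (clarify)
  fix x a b assume d: "distinct (vars q)" and xab: "(x, a, b) \<in> set (fst (bld q 0 1 2))"
  have "distinct (map fst (fst (bld q 0 1 2)))" using d by (simp add: bld_fst)
  from map_of_is_SomeI[OF this xab] show "etail q x = a \<and> ehead q x = b"
    by (simp add: etail_def ehead_def)
qed

lemma chain_Cons: "es \<noteq> [] \<Longrightarrow>
  (\<forall>k. Suc k < length (e#es) \<longrightarrow> H ((e#es)!k) = T ((e#es)!Suc k)) \<longleftrightarrow>
  H e = T (hd es) \<and> (\<forall>k. Suc k < length es \<longrightarrow> H (es!k) = T (es!Suc k))"
proof
  assume ne: "es \<noteq> []" and a: "\<forall>k. Suc k < length (e#es) \<longrightarrow> H ((e#es)!k) = T ((e#es)!Suc k)"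
  from a[rule_format, of 0] ne have "H e = T (hd es)" by (simp add: hd_conv_nth)
  moreover have "\<forall>k. Suc k < length es \<longrightarrow> H (es!k) = T (es!Suc k)"
  proof (intro allI impI)
    fix k assume "Suc k < length es"
    with a[rule_format, of "Suc k"] show "H (es!k) = T (es!Suc k)" by simp
  qed
  ultimately show "H e = T (hd es) \<and> (\<forall>k. Suc k < length es \<longrightarrow> H (es!k) = T (es!Suc k))" ..
next
  assume ne: "es \<noteq> []" and a: "H e = T (hd es) \<and> (\<forall>k. Suc k < length es \<longrightarrow> H (es!k) = T (es!Suc k))"
  show "\<forall>k. Suc k < length (e#es) \<longrightarrow> H ((e#es)!k) = T ((e#es)!Suc k)"
  proof (intro allI impI)
    fix k assume k: "Suc k < length (e#es)"
    show "H ((e#es)!k) = T ((e#es)!Suc k)"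
    proof (cases k)
      case 0 with a ne show ?thesis by (simp add: hd_conv_nth)
    next
      case (Suc j) with a k show ?thesis by simp
    qed
  qed
qed

lemma wk_iff: "es \<noteq> [] \<Longrightarrow> wk T H u v es \<longleftrightarrow>
   T (hd es) = u \<and> H (last es) = v \<and> (\<forall>k. Suc k < length es \<longrightarrow> H (es!k) = T (es!Suc k))"
proof (induction es arbitrary: u)
  case Nil then show ?case by simp
next
  case (Cons e es)
  show ?case
  proof (cases "es = []")
    case True then show ?thesis by auto
  next
    case False
    have "wk T H u v (e#es) \<longleftrightarrow> T e = u \<and> wk T H (H e) v es" by simp
    also have "\<dots> \<longleftrightarrow> T e = u \<and> T (hd es) = H e \<and> H (last es) = v \<and> (\<forall>k. Suc k < length es \<longrightarrow> H (es!k) = T (es!Suc k))"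
      using Cons.IH[OF False] by simp
    also have "\<dots> \<longleftrightarrow> T (hd (e#es)) = u \<and> H (last (e#es)) = v \<and> (\<forall>k. Suc k < length (e#es) \<longrightarrow> H ((e#es)!k) = T ((e#es)!Suc k))"
      using chain_Cons[OF False, where H=H and T=T and e=e] False by auto
    finally show ?thesis .
  qed
qed

lemma walk01_max: assumes d: "distinct (vars q)" and w: "wk (etail q) (ehead q) 0 1 es"
  and s: "set es \<subseteq> set (vars q)"
  shows "maxpath q es"
proof -
  let ?T = "etail q" and ?H = "ehead q"
  have c: "consis ?H ?T q 0 1 2" by (rule consis_top[OF d])
  have ne: "es \<noteq> []" using w by (cases es) auto
  from walk_sp[OF c _ _ _ w s] have dis: "distinct (0 # map ?H es)" by simp
  have hd0: "?T (hd es) = 0" using wk_start[OF w ne] by simp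
  have dp: "dpath q es"
    unfolding dpath_def using ne s dis hd0 w wk_iff[OF ne, of ?T ?H 0 1] distinct_map by auto
  have noH0: "\<forall>x\<in>set (vars q). ?H x \<noteq> 0" using ends[OF c] by fastforce
  have noT1: "\<forall>x\<in>set (vars q). ?T x \<noteq> 1" using ends[OF c] by fastforce
  have "\<not> (\<exists>es'. dpath q es' \<and> sublist es es' \<and> es' \<noteq> es)"
  proof
    assume "\<exists>es'. dpath q es' \<and> sublist es es' \<and> es' \<noteq> es"
    then obtain es' where dp': "dpath q es'" and sl: "sublist es es'" and neq: "es' \<noteq> es" by blast
    from sl obtain xs ys where es': "es' = xs @ es @ ys" by (auto simp: sublist_def)
    from dp' have ne': "es' \<noteq> []" and s': "set es' \<subseteq> set (vars q)" by (auto simp: dpath_def)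
    from dp' wk_iff[OF ne', of ?T ?H "?T (hd es')" "?H (last es')"] have "wk ?T ?H (?T (hd es')) (?H (last es')) es'"
      by (auto simp: dpath_def)
    then obtain a1 a2 where a: "wk ?T ?H (?T (hd es')) a1 xs" "wk ?T ?H a1 a2 es" "wk ?T ?H a2 (?H (last es')) ys"
      unfolding es' wk_append by blast
    have "a1 = 0" using wk_start[OF a(2) ne] hd0 by simp
    have "a2 = 1" using wk_end[OF a(2) ne] wk_end[OF w ne] by simp
    have "xs = []"
    proof (rule ccontr)
      assume xne: "xs \<noteq> []"
      from wk_end[OF a(1) xne] \<open>a1 = 0\<close> have "?H (last xs) = 0" by simp
      moreover have "last xs \<in> set (vars q)" using xne s' es' by auto
      ultimately show False using noH0 by auto
    qed
    moreover have "ys = []"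
    proof (rule ccontr)
      assume yne: "ys \<noteq> []"
      from wk_start[OF a(3) yne] \<open>a2 = 1\<close> have "?T (hd ys) = 1" by simp
      moreover have "hd ys \<in> set (vars q)" using yne s' es' by auto
      ultimately show False using noT1 by auto
    qed
    ultimately show False using es' neq by simp
  qed
  with dp show ?thesis by (simp add: maxpath_def)
qed

lemma maxpath_iff: assumes d: "distinct (vars q)"
  shows "maxpath q es \<longleftrightarrow> wk (etail q) (ehead q) 0 1 es \<and> set es \<subseteq> set (vars q)"
proof
  assume m: "maxpath q es"
  let ?T = "etail q" and ?H = "ehead q"
  have c: "consis ?H ?T q 0 1 2" by (rule consis_top[OF d])
  from m have dp: "dpath q es" by (simp add: maxpath_def)
  then have ne: "es \<noteq> []" and s: "set es \<subseteq> set (vars q)" by (auto simp: dpath_def)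
  from dp wk_iff[OF ne, of ?T ?H "?T (hd es)" "?H (last es)"] have w: "wk ?T ?H (?T (hd es)) (?H (last es)) es"
    by (auto simp: dpath_def)
  from infix_walk[OF c _ _ _ w ne s] obtain x y where
    xy: "wk ?T ?H 0 1 (x @ es @ y)" "set x \<subseteq> set (vars q)" "set y \<subseteq> set (vars q)" by auto
  have "maxpath q (x @ es @ y)" using walk01_max[OF d xy(1)] xy s by auto
  then have "dpath q (x @ es @ y)" by (simp add: maxpath_def)
  moreover have "sublist es (x @ es @ y)" by (auto simp: sublist_def)
  ultimately have "x @ es @ y = es" using m by (auto simp: maxpath_def)
  with xy s show "wk ?T ?H 0 1 es \<and> set es \<subseteq> set (vars q)" by simp
next
  assume "wk (etail q) (ehead q) 0 1 es \<and> set es \<subseteq> set (vars q)"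
  then show "maxpath q es" using walk01_max[OF d] by blast
qed

lemma maxpath_spaths: assumes d: "distinct (vars q)"
  shows "(\<exists>es. maxpath q es \<and> set es = X) \<longleftrightarrow> X \<in> spaths q"
proof
  assume "\<exists>es. maxpath q es \<and> set es = X"
  then obtain es where "maxpath q es" "set es = X" by blast
  with maxpath_iff[OF d] walk_sp[OF consis_top[OF d]] show "X \<in> spaths q" by auto
next
  assume "X \<in> spaths q"
  from sp_walk[OF consis_top[OF d] this] obtain es where
    "wk (etail q) (ehead q) 0 1 es" "set es = X" "set es \<subseteq> set (vars q)" by blast
  with maxpath_iff[OF d] show "\<exists>es. maxpath q es \<and> set es = X" by blast
qed


definition effl :: "(nat \<Rightarrow> nat) \<Rightarrow> (nat \<Rightarrow> nat) \<Rightarrow> nat set \<Rightarrow> (nat \<Rightarrow> 'a::ab_group_add) \<Rightarrow> nat \<Rightarrow> 'a" where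
  "effl H T A a v = (\<Sum>i\<in>{i\<in>A. H i = v}. a i) - (\<Sum>i\<in>{i\<in>A. T i = v}. a i)"

lemma effl_union: "finite A \<Longrightarrow> finite C \<Longrightarrow> A \<inter> C = {} \<Longrightarrow>
   effl H T (A \<union> C) a v = effl H T A a v + effl H T C a v"
proof -
  assume fA: "finite A" and fC: "finite C" and d: "A \<inter> C = {}"
  have 1: "{i\<in>A \<union> C. H i = v} = {i\<in>A. H i = v} \<union> {i\<in>C. H i = v}" by auto
  have 2: "{i\<in>A \<union> C. T i = v} = {i\<in>A. T i = v} \<union> {i\<in>C. T i = v}" by auto
  have "(\<Sum>i\<in>{i\<in>A \<union> C. H i = v}. a i) = (\<Sum>i\<in>{i\<in>A. H i = v}. a i) + (\<Sum>i\<in>{i\<in>C. H i = v}. a i)"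
    unfolding 1 by (rule sum.union_disjoint) (use fA fC d in auto)
  moreover have "(\<Sum>i\<in>{i\<in>A \<union> C. T i = v}. a i) = (\<Sum>i\<in>{i\<in>A. T i = v}. a i) + (\<Sum>i\<in>{i\<in>C. T i = v}. a i)"
    unfolding 2 by (rule sum.union_disjoint) (use fA fC d in auto)
  ultimately show ?thesis by (simp add: effl_def algebra_simps)
qed

lemma effl_zero: "\<forall>i\<in>A. H i \<noteq> v \<and> T i \<noteq> v \<Longrightarrow> effl H T A a v = 0"
proof -
  assume h: "\<forall>i\<in>A. H i \<noteq> v \<and> T i \<noteq> v"
  have e1: "{i\<in>A. H i = v} = {}" using h by blast
  have e2: "{i\<in>A. T i = v} = {}" using h by blast
  show ?thesis unfolding effl_def e1 e2 by simp
qed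

lemma effl_single: "effl H T {x} a v = (if H x = v then a x else 0) - (if T x = v then a x else 0)"
proof -
  have e1: "{i\<in>{x}. H i = v} = (if H x = v then {x} else {})" by auto
  have e2: "{i\<in>{x}. T i = v} = (if T x = v then {x} else {})" by auto
  show ?thesis unfolding effl_def e1 e2 by simp
qed

lemma effl_outside: "consis H T r s t f \<Longrightarrow> v \<noteq> s \<Longrightarrow> v \<noteq> t \<Longrightarrow> (v < f \<or> snd (bld r s t f) \<le> v) \<Longrightarrow>
   effl H T (set (vars r) \<inter> X) a v = 0"
  by (rule effl_zero) (use ends in fastforce)

lemma distinct_disj: "distinct (vars r1 @ vars r2) \<Longrightarrow> set (vars r1) \<inter> set (vars r2) = {}"
  by simp

lemma split_inter: "set (vars r1 @ vars r2) \<inter> X = (set (vars r1) \<inter> X) \<union> (set (vars r2) \<inter> X)" by auto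

lemma flow_sink: "consis H T r s t f \<Longrightarrow> s < f \<Longrightarrow> t < f \<Longrightarrow> s \<noteq> t \<Longrightarrow> distinct (vars r) \<Longrightarrow>
   (\<forall>v\<in>{f..<snd (bld r s t f)}. effl H T (set (vars r) \<inter> X) a v = 0) \<Longrightarrow>
   effl H T (set (vars r) \<inter> X) a t = - effl H T (set (vars r) \<inter> X) a s"
proof (induction r arbitrary: s t f)
  case (Var x)
  then have "T x = s" "H x = t" by (auto simp: consis_Var)
  show ?case
  proof (cases "x \<in> X")
    case True
    then have "set (vars (Var x)) \<inter> X = {x}" by auto
    then show ?thesis using \<open>T x = s\<close> \<open>H x = t\<close> Var.prems(4) by (simp add: effl_single)
  next
    case False
    then have "set (vars (Var x)) \<inter> X = {}" by auto
    then show ?thesis by (simp add: effl_def)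
  qed
next
  case (Meet r1 r2)
  define f1 where "f1 = snd (bld r1 s t f)"
  define f2 where "f2 = snd (bld r2 s t f1)"
  have c1: "consis H T r1 s t f" and c2: "consis H T r2 s t f1"
    using Meet.prems(1) by (auto simp: consis_Meet f1_def)
  have m1: "f \<le> f1" unfolding f1_def by (rule bld_mono)
  have m2: "f1 \<le> f2" unfolding f2_def by (rule bld_mono)
  have f2e: "snd (bld (Meet r1 r2) s t f) = f2" by (simp add: bld_Meet f1_def f2_def)
  let ?E = "\<lambda>r v. effl H T (set (vars r) \<inter> X) a v"
  have dis: "set (vars r1) \<inter> set (vars r2) = {}" using Meet.prems(5) by simp
  have add: "?E (Meet r1 r2) v = ?E r1 v + ?E r2 v" for v
  proof -
    have "set (vars (Meet r1 r2)) \<inter> X = (set (vars r1) \<inter> X) \<union> (set (vars r2) \<inter> X)" by auto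
    then show ?thesis by (simp only:) (rule effl_union, use dis in auto)
  qed
  have z2: "?E r2 v = 0" if "v \<in> {f..<f1}" for v
    using effl_outside[OF c2, of v] that Meet.prems(2,3) f2_def by auto
  have z1: "?E r1 v = 0" if "v \<in> {f1..<f2}" for v
    using effl_outside[OF c1, of v] that Meet.prems(2,3) m1 f1_def by auto
  have i1: "\<forall>v\<in>{f..<f1}. ?E r1 v = 0"
  proof
    fix v assume v: "v \<in> {f..<f1}"
    then have "v \<in> {f..<snd (bld (Meet r1 r2) s t f)}" using f2e m2 by auto
    with Meet.prems(6) have "?E (Meet r1 r2) v = 0" by blast
    with add[of v] z2[OF v] show "?E r1 v = 0" by simp
  qed
  have i2: "\<forall>v\<in>{f1..<f2}. ?E r2 v = 0"
  proof
    fix v assume v: "v \<in> {f1..<f2}"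
    then have "v \<in> {f..<snd (bld (Meet r1 r2) s t f)}" using f2e m1 by auto
    with Meet.prems(6) have "?E (Meet r1 r2) v = 0" by blast
    with add[of v] z1[OF v] show "?E r2 v = 0" by simp
  qed
  have h1: "?E r1 t = - ?E r1 s"
    using Meet.IH(1)[OF c1 Meet.prems(2-4) _ ] Meet.prems(5) i1 f1_def by auto
  have h2: "?E r2 t = - ?E r2 s"
    using Meet.IH(2)[OF c2 _ _ Meet.prems(4)] Meet.prems(2,3,5) m1 i2 f2_def by auto
  show ?case using add h1 h2 by simp
next
  case (Join r1 r2)
  define f1 where "f1 = snd (bld r1 s f (Suc f))"
  define f2 where "f2 = snd (bld r2 f t f1)"
  have c1: "consis H T r1 s f (Suc f)" and c2: "consis H T r2 f t f1"
    using Join.prems(1) by (auto simp: consis_Join f1_def)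
  have m1: "Suc f \<le> f1" unfolding f1_def by (rule bld_mono)
  have m2: "f1 \<le> f2" unfolding f2_def by (rule bld_mono)
  have f2e: "snd (bld (Join r1 r2) s t f) = f2" by (simp add: bld_Join f1_def f2_def)
  let ?E = "\<lambda>r v. effl H T (set (vars r) \<inter> X) a v"
  have dis: "set (vars r1) \<inter> set (vars r2) = {}" using Join.prems(5) by simp
  have add: "?E (Join r1 r2) v = ?E r1 v + ?E r2 v" for v
  proof -
    have "set (vars (Join r1 r2)) \<inter> X = (set (vars r1) \<inter> X) \<union> (set (vars r2) \<inter> X)" by auto
    then show ?thesis by (simp only:) (rule effl_union, use dis in auto)
  qed
  have z2: "?E r2 v = 0" if "v \<noteq> f" "v \<noteq> t" "v < f1" for v
    using effl_outside[OF c2, of v] that f2_def by auto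
  have z1: "?E r1 v = 0" if "v \<noteq> f" "v \<noteq> s" "f1 \<le> v" for v
    using effl_outside[OF c1, of v] that f1_def by auto
  have i1: "\<forall>v\<in>{Suc f..<f1}. ?E r1 v = 0"
  proof
    fix v assume v: "v \<in> {Suc f..<f1}"
    then have "v \<in> {f..<snd (bld (Join r1 r2) s t f)}" using f2e m2 by auto
    with Join.prems(6) have "?E (Join r1 r2) v = 0" by blast
    moreover have "?E r2 v = 0" using z2[of v] v Join.prems(3) by auto
    ultimately show "?E r1 v = 0" using add[of v] by simp
  qed
  have i2: "\<forall>v\<in>{f1..<f2}. ?E r2 v = 0"
  proof
    fix v assume v: "v \<in> {f1..<f2}"
    then have "v \<in> {f..<snd (bld (Join r1 r2) s t f)}" using f2e m1 by auto
    with Join.prems(6) have "?E (Join r1 r2) v = 0" by blast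
    moreover have "?E r1 v = 0" using z1[of v] v Join.prems(2) m1 by auto
    ultimately show "?E r2 v = 0" using add[of v] by simp
  qed
  have h1: "?E r1 f = - ?E r1 s"
    using Join.IH(1)[OF c1] Join.prems(2,5) i1 f1_def by auto
  have h2: "?E r2 t = - ?E r2 f"
    using Join.IH(2)[OF c2] Join.prems(3,4,5) m1 i2 f2_def by auto
  have "?E (Join r1 r2) f = 0" using Join.prems(6) f2e m1 m2 by auto
  moreover have "?E r2 s = 0" using z2[of s] Join.prems(2,4) m1 by auto
  moreover have "?E r1 t = 0" using z1 effl_outside[OF c1, of t] Join.prems(2,3,4) by auto
  ultimately show ?case using add[of f] add[of s] add[of t] h1 h2 by (simp add: algebra_simps)
qed


locale lmod =
  fixes M :: "'m set" and add :: "'m \<Rightarrow> 'm \<Rightarrow> 'm" and z :: 'm and sm :: "'a::ring_1 \<Rightarrow> 'm \<Rightarrow> 'm"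
  assumes lm: "left_module M add z sm"
begin

lemma z_in: "z \<in> M" using lm unfolding left_module_def by meson
lemma add_in: "x \<in> M \<Longrightarrow> y \<in> M \<Longrightarrow> add x y \<in> M" using lm unfolding left_module_def by meson
lemma sm_in: "x \<in> M \<Longrightarrow> sm r x \<in> M" using lm unfolding left_module_def by meson
lemma assoc: "x \<in> M \<Longrightarrow> y \<in> M \<Longrightarrow> w \<in> M \<Longrightarrow> add (add x y) w = add x (add y w)"
  using lm unfolding left_module_def by meson
lemma comm: "x \<in> M \<Longrightarrow> y \<in> M \<Longrightarrow> add x y = add y x" using lm unfolding left_module_def by meson
lemma zl: "x \<in> M \<Longrightarrow> add z x = x" using lm unfolding left_module_def by meson
lemma zr: "x \<in> M \<Longrightarrow> add x z = x" using zl comm z_in by metis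
lemma neg: "x \<in> M \<Longrightarrow> \<exists>y\<in>M. add x y = z" using lm unfolding left_module_def by meson
lemma sm_addr: "x \<in> M \<Longrightarrow> y \<in> M \<Longrightarrow> sm r (add x y) = add (sm r x) (sm r y)"
  using lm unfolding left_module_def by meson
lemma sm_addl: "x \<in> M \<Longrightarrow> sm (r + s) x = add (sm r x) (sm s x)"
  using lm unfolding left_module_def by meson
lemma sm_one: "x \<in> M \<Longrightarrow> sm 1 x = x" using lm unfolding left_module_def by meson

lemma cancel: assumes "a \<in> M" "b \<in> M" "y \<in> M" "add a y = add b y" shows "a = b"
proof -
  obtain y' where y': "y' \<in> M" "add y y' = z" using neg[OF assms(3)] by blast
  have "a = add a (add y y')" using y' zr assms by simp
  also have "\<dots> = add (add a y) y'" by (simp only: assoc[OF assms(1,3) y'(1)])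
  also have "\<dots> = add (add b y) y'" by (simp only: assms(4))
  also have "\<dots> = add b (add y y')" by (simp only: assoc[OF assms(2,3) y'(1)])
  also have "\<dots> = b" using y' zr assms by simp
  finally show ?thesis .
qed

lemma sm_zero: assumes "x \<in> M" shows "sm 0 x = z"
proof -
  have "add (sm 0 x) (sm 0 x) = add z (sm 0 x)"
    using sm_addl[OF assms, of 0 0] zl sm_in assms by simp
  then show ?thesis using cancel sm_in z_in assms by blast
qed

definition msum :: "nat list \<Rightarrow> nat set \<Rightarrow> (nat \<Rightarrow> 'm) \<Rightarrow> 'm" where
  "msum L P g = foldr (\<lambda>j acc. if j \<in> P then add (g j) acc else acc) L z"

lemma msum_Nil: "msum [] P g = z" by (simp add: msum_def)
lemma msum_Cons: "msum (j#L) P g = (if j \<in> P then add (g j) (msum L P g) else msum L P g)"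
  by (simp add: msum_def)

lemma msum_in: "\<forall>j\<in>P. g j \<in> M \<Longrightarrow> msum L P g \<in> M"
  by (induction L) (auto simp: msum_Nil msum_Cons z_in add_in)

lemma msum_empty: "msum L {} g = z"
  by (induction L) (auto simp: msum_Nil msum_Cons)

lemma msum_cong: "\<forall>j\<in>P. g j = h j \<Longrightarrow> msum L P g = msum L P h"
  by (induction L) (auto simp: msum_Nil msum_Cons)

lemma msum_union: assumes "P \<inter> Q = {}" "\<forall>j\<in>P \<union> Q. g j \<in> M"
  shows "msum L (P \<union> Q) g = add (msum L P g) (msum L Q g)"
proof (induction L)
  case Nil then show ?case by (simp add: msum_Nil zl z_in)
next
  case (Cons j L)
  have iP: "msum L P g \<in> M" and iQ: "msum L Q g \<in> M" using assms by (auto intro: msum_in)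
  show ?case
  proof (cases "j \<in> P")
    case True
    then have "j \<notin> Q" using assms by auto
    with True Cons.IH show ?thesis using assms iP iQ by (simp add: msum_Cons assoc)
  next
    case False
    show ?thesis
    proof (cases "j \<in> Q")
      case True
      have gj: "g j \<in> M" using assms True by auto
      have "add (g j) (add (msum L P g) (msum L Q g)) = add (msum L P g) (add (g j) (msum L Q g))"
        using gj iP iQ by (metis assoc comm)
      with True False Cons.IH show ?thesis by (simp add: msum_Cons)
    next
      case False2: False
      with False Cons.IH show ?thesis by (simp add: msum_Cons)
    qed
  qed
qed

lemma msum_single: "distinct L \<Longrightarrow> j \<in> set L \<Longrightarrow> g j \<in> M \<Longrightarrow> msum L {j} g = g j"
proof (induction L)
  case Nil then show ?case by simp
next
  case (Cons k L)
  show ?case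
  proof (cases "k = j")
    case True
    with Cons.prems have "j \<notin> set L" by auto
    then have "msum L {j} g = z"
    proof (induction L)
      case (Cons x xs) then show ?case by (auto simp: msum_Cons)
    qed (simp add: msum_Nil)
    with True Cons.prems show ?thesis by (simp add: msum_Cons zr)
  next
    case False
    with Cons show ?thesis by (simp add: msum_Cons)
  qed
qed

lemma lev_in: "\<forall>i\<in>set (vars r). submodule M add z sm (B i) \<Longrightarrow> lev add B r \<subseteq> M"
  by (induction r) (auto simp: submodule_def intro: add_in)


lemma qlem:
  assumes "\<forall>i\<in>set (vars r). submodule M add z sm (B i)" "distinct (vars r)" "distinct L"
    "set (vars r) \<subseteq> set L" "\<forall>j\<in>set (vars r). d j \<in> B j" "\<forall>A\<in>spaths r. msum L A d = u"
  shows "u \<in> lev add B r"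
  using assms
proof (induction r arbitrary: u)
  case (Var x)
  have dx: "d x \<in> B x" using Var.prems by simp
  then have "d x \<in> M" using Var.prems(1) by (auto simp: submodule_def)
  then have "msum L {x} d = d x" using msum_single Var.prems(3,4) by simp
  with Var.prems(6) dx show ?case by simp
next
  case (Join r1 r2)
  have dM: "d j \<in> M" if "j \<in> set (vars (Join r1 r2))" for j
  proof -
    have "submodule M add z sm (B j)" "d j \<in> B j" using Join.prems(1,5) that by auto
    then show ?thesis unfolding submodule_def by blast
  qed
  obtain A10 where A10: "A10 \<in> spaths r1" using spaths_ne by blast
  obtain A20 where A20: "A20 \<in> spaths r2" using spaths_ne by blast
  define x where "x = msum L A10 d"
  define y where "y = msum L A20 d"
  have un: "msum L (A1 \<union> A2) d = add (msum L A1 d) (msum L A2 d)" if "A1 \<in> spaths r1" "A2 \<in> spaths r2" for A1 A2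
  proof (rule msum_union)
    show "A1 \<inter> A2 = {}" using spaths_sub[OF that(1)] spaths_sub[OF that(2)] Join.prems(2) by auto
    show "\<forall>j\<in>A1 \<union> A2. d j \<in> M" using spaths_sub[OF that(1)] spaths_sub[OF that(2)] dM by auto
  qed
  have inM: "msum L A d \<in> M" if "A \<subseteq> set (vars (Join r1 r2))" for A
    by (rule msum_in) (use that dM in auto)
  have js: "msum L (A1 \<union> A2) d = u" if "A1 \<in> spaths r1" "A2 \<in> spaths r2" for A1 A2
  proof -
    have "A1 \<union> A2 \<in> spaths (Join r1 r2)" using that by auto
    then show ?thesis using Join.prems(6) by blast
  qed
  have u: "u = add x y" using un[OF A10 A20] js[OF A10 A20] unfolding x_def y_def by auto
  have xM: "x \<in> M" unfolding x_def using inM spaths_sub[OF A10] by auto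
  have yM: "y \<in> M" unfolding y_def using inM spaths_sub[OF A20] by auto
  have allx: "\<forall>A\<in>spaths r1. msum L A d = x"
  proof
    fix A1 assume A1: "A1 \<in> spaths r1"
    have "add (msum L A1 d) y = u" using un[OF A1 A20] js[OF A1 A20] unfolding y_def by auto
    then have "add (msum L A1 d) y = add x y" using u by simp
    moreover have "msum L A1 d \<in> M" using inM spaths_sub[OF A1] by auto
    ultimately show "msum L A1 d = x" using cancel xM yM by blast
  qed
  have ally: "\<forall>A\<in>spaths r2. msum L A d = y"
  proof
    fix A2 assume A2: "A2 \<in> spaths r2"
    have iA2: "msum L A2 d \<in> M" using inM spaths_sub[OF A2] by auto
    have "add x (msum L A2 d) = u" using un[OF A10 A2] js[OF A10 A2] unfolding x_def by auto
    then have "add (msum L A2 d) x = add y x" using u comm iA2 xM yM by metis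
    then show "msum L A2 d = y" using cancel iA2 xM yM by auto
  qed
  have "x \<in> lev add B r1" using Join.IH(1)[of x] Join.prems allx by auto
  moreover have "y \<in> lev add B r2" using Join.IH(2)[of y] Join.prems ally by auto
  ultimately show ?case using u by auto
next
  case (Meet r1 r2)
  have "u \<in> lev add B r1" using Meet.IH(1)[of u] Meet.prems by auto
  moreover have "u \<in> lev add B r2" using Meet.IH(2)[of u] Meet.prems by auto
  ultimately show ?case by simp
qed


lemma subM: "submodule M add z sm S \<Longrightarrow> x \<in> S \<Longrightarrow> x \<in> M"
  unfolding submodule_def by blast

lemma plem:
  fixes a :: "nat \<Rightarrow> 'a"
  assumes "\<forall>i\<in>set (vars r). submodule M add z sm (B i)" "distinct (vars r)" "distinct L"
    "set (vars r) \<subseteq> set L" "u \<in> lev add B r"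
  shows "\<exists>c. (\<forall>i\<in>set (vars r). c i \<in> B i) \<and>
    (\<forall>X s t f b. consis H T r s t f \<and> s < f \<and> t < f \<and> s \<noteq> t \<and>
        (\<forall>v\<in>{f..<snd (bld r s t f)}. effl H T (set (vars r) \<inter> X) a v = 0) \<and>
        effl H T (set (vars r) \<inter> X) a s = - b \<longrightarrow>
        msum L (set (vars r) \<inter> X) (\<lambda>i. sm (a i) (c i)) = sm b u)"
  using assms
proof (induction r arbitrary: u)
  case (Var x)
  have uB: "u \<in> B x" using Var.prems by simp
  have uM: "u \<in> M" using subM uB Var.prems(1) by simp
  show ?case
  proof (intro exI[of _ "\<lambda>_. u"] conjI allI impI)
    show "\<forall>i\<in>set (vars (Var x)). u \<in> B i" using uB by simp
  next
    fix X s t f b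
    assume h: "consis H T (Var x) s t f \<and> s < f \<and> t < f \<and> s \<noteq> t \<and>
        (\<forall>v\<in>{f..<snd (bld (Var x) s t f)}. effl H T (set (vars (Var x)) \<inter> X) a v = 0) \<and>
        effl H T (set (vars (Var x)) \<inter> X) a s = - b"
    then have Tx: "T x = s" and Hx: "H x = t" and st: "s \<noteq> t" by (auto simp: consis_Var)
    show "msum L (set (vars (Var x)) \<inter> X) (\<lambda>i. sm (a i) u) = sm b u"
    proof (cases "x \<in> X")
      case True
      then have e: "set (vars (Var x)) \<inter> X = {x}" by auto
      from h have "effl H T {x} a s = - b" unfolding e by simp
      then have "b = a x" using Tx Hx st by (simp add: effl_single)
      moreover have "msum L {x} (\<lambda>i. sm (a i) u) = sm (a x) u"
        using msum_single[of L x "\<lambda>i. sm (a i) u"] Var.prems(3,4) sm_in[OF uM] by simp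
      ultimately show ?thesis using e by simp
    next
      case False
      then have e: "set (vars (Var x)) \<inter> X = {}" by auto
      from h have "effl H T {} a s = - b" unfolding e by simp
      then have "b = 0" by (simp add: effl_def)
      then show ?thesis using e msum_empty sm_zero[OF uM] by simp
    qed
  qed
next
  case (Join r1 r2)
  from Join.prems(5) obtain x y where u: "u = add x y" and x: "x \<in> lev add B r1" and y: "y \<in> lev add B r2"
    by auto
  have xM: "x \<in> M" using lev_in[of r1 B] Join.prems(1) x by auto
  have yM: "y \<in> M" using lev_in[of r2 B] Join.prems(1) y by auto
  from Join.IH(1)[of x] Join.prems x obtain c1 where c1B: "\<forall>i\<in>set (vars r1). c1 i \<in> B i" and
    c1P: "\<forall>X s t f b. consis H T r1 s t f \<and> s < f \<and> t < f \<and> s \<noteq> t \<and>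
        (\<forall>v\<in>{f..<snd (bld r1 s t f)}. effl H T (set (vars r1) \<inter> X) a v = 0) \<and>
        effl H T (set (vars r1) \<inter> X) a s = - b \<longrightarrow>
        msum L (set (vars r1) \<inter> X) (\<lambda>i. sm (a i) (c1 i)) = sm b x" by auto
  from Join.IH(2)[of y] Join.prems y obtain c2 where c2B: "\<forall>i\<in>set (vars r2). c2 i \<in> B i" and
    c2P: "\<forall>X s t f b. consis H T r2 s t f \<and> s < f \<and> t < f \<and> s \<noteq> t \<and>
        (\<forall>v\<in>{f..<snd (bld r2 s t f)}. effl H T (set (vars r2) \<inter> X) a v = 0) \<and>
        effl H T (set (vars r2) \<inter> X) a s = - b \<longrightarrow>
        msum L (set (vars r2) \<inter> X) (\<lambda>i. sm (a i) (c2 i)) = sm b y" by auto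
  have dis: "set (vars r1) \<inter> set (vars r2) = {}" using Join.prems(2) by simp
  define c where "c = (\<lambda>i. if i \<in> set (vars r1) then c1 i else c2 i)"
  have cB: "\<forall>i\<in>set (vars (Join r1 r2)). c i \<in> B i" using c1B c2B dis unfolding c_def by auto
  have cM: "c i \<in> M" if "i \<in> set (vars (Join r1 r2))" for i
    using cB that Join.prems(1) subM by blast
  show ?case
  proof (intro exI[of _ c] conjI allI impI)
    show "\<forall>i\<in>set (vars (Join r1 r2)). c i \<in> B i" by (rule cB)
  next
    fix X s t f b
    assume h: "consis H T (Join r1 r2) s t f \<and> s < f \<and> t < f \<and> s \<noteq> t \<and>
        (\<forall>v\<in>{f..<snd (bld (Join r1 r2) s t f)}. effl H T (set (vars (Join r1 r2)) \<inter> X) a v = 0) \<and>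
        effl H T (set (vars (Join r1 r2)) \<inter> X) a s = - b"
    define f1 where "f1 = snd (bld r1 s f (Suc f))"
    define f2 where "f2 = snd (bld r2 f t f1)"
    have c1: "consis H T r1 s f (Suc f)" and c2: "consis H T r2 f t f1"
      using h by (auto simp: consis_Join f1_def)
    have m1: "Suc f \<le> f1" unfolding f1_def by (rule bld_mono)
    have m2: "f1 \<le> f2" unfolding f2_def by (rule bld_mono)
    have f2e: "snd (bld (Join r1 r2) s t f) = f2" by (simp add: bld_Join f1_def f2_def)
    let ?E = "\<lambda>r v. effl H T (set (vars r) \<inter> X) a v"
    have split: "set (vars (Join r1 r2)) \<inter> X = (set (vars r1) \<inter> X) \<union> (set (vars r2) \<inter> X)" by auto
    have add: "?E (Join r1 r2) v = ?E r1 v + ?E r2 v" for v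
      using split by (simp only:) (rule effl_union, use dis in auto)
    have z2: "?E r2 v = 0" if "v \<noteq> f" "v \<noteq> t" "v < f1" for v
      using effl_outside[OF c2, of v] that f2_def by auto
    have z1: "?E r1 v = 0" if "v \<noteq> f" "v \<noteq> s" "f1 \<le> v" for v
      using effl_outside[OF c1, of v] that f1_def by auto
    have i1: "\<forall>v\<in>{Suc f..<f1}. ?E r1 v = 0"
    proof
      fix v assume v: "v \<in> {Suc f..<f1}"
      then have "v \<in> {f..<snd (bld (Join r1 r2) s t f)}" using f2e m2 by auto
      with h have "?E (Join r1 r2) v = 0" by blast
      moreover have "?E r2 v = 0" using z2[of v] v h by auto
      ultimately show "?E r1 v = 0" using add[of v] by simp
    qed
    have i2: "\<forall>v\<in>{f1..<f2}. ?E r2 v = 0"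
    proof
      fix v assume v: "v \<in> {f1..<f2}"
      then have "v \<in> {f..<snd (bld (Join r1 r2) s t f)}" using f2e m1 by auto
      with h have "?E (Join r1 r2) v = 0" by blast
      moreover have "?E r1 v = 0" using z1[of v] v h m1 by auto
      ultimately show "?E r2 v = 0" using add[of v] by simp
    qed
    have e2s: "?E r2 s = 0" using z2[of s] h m1 by auto
    have e1s: "?E r1 s = - b" using h add[of s] e2s by simp
    have d1: "distinct (vars r1)" and d2: "distinct (vars r2)" using Join.prems(2) by auto
    have e1f: "?E r1 f = - ?E r1 s"
      using flow_sink[OF c1 _ _ _ d1] h i1 f1_def by auto
    have "?E (Join r1 r2) f = 0" using h f2e m1 m2 by auto
    then have e2f: "?E r2 f = - b" using add[of f] e1f e1s by (simp add: eq_neg_iff_add_eq_0 add.commute)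
    have s1: "msum L (set (vars r1) \<inter> X) (\<lambda>i. sm (a i) (c1 i)) = sm b x"
      using c1P[rule_format, of s f "Suc f" X b] c1 h i1 e1s f1_def by auto
    have s2: "msum L (set (vars r2) \<inter> X) (\<lambda>i. sm (a i) (c2 i)) = sm b y"
      using c2P[rule_format, of f t f1 X b] c2 h i2 e2f f2_def m1 by auto
    have "msum L (set (vars (Join r1 r2)) \<inter> X) (\<lambda>i. sm (a i) (c i)) =
          add (msum L (set (vars r1) \<inter> X) (\<lambda>i. sm (a i) (c i))) (msum L (set (vars r2) \<inter> X) (\<lambda>i. sm (a i) (c i)))"
      unfolding split by (rule msum_union) (use dis cM sm_in in auto)
    also have "msum L (set (vars r1) \<inter> X) (\<lambda>i. sm (a i) (c i)) = msum L (set (vars r1) \<inter> X) (\<lambda>i. sm (a i) (c1 i))"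
      by (rule msum_cong) (auto simp: c_def)
    also have "msum L (set (vars r2) \<inter> X) (\<lambda>i. sm (a i) (c i)) = msum L (set (vars r2) \<inter> X) (\<lambda>i. sm (a i) (c2 i))"
      by (rule msum_cong) (use dis in \<open>auto simp: c_def\<close>)
    finally show "msum L (set (vars (Join r1 r2)) \<inter> X) (\<lambda>i. sm (a i) (c i)) = sm b u"
      using s1 s2 u sm_addr[OF xM yM] by simp
  qed
next
  case (Meet r1 r2)
  from Meet.prems(5) have x: "u \<in> lev add B r1" and y: "u \<in> lev add B r2" by auto
  have uM: "u \<in> M" using lev_in[of r1 B] Meet.prems(1) x by auto
  from Meet.IH(1)[of u] Meet.prems x obtain c1 where c1B: "\<forall>i\<in>set (vars r1). c1 i \<in> B i" and
    c1P: "\<forall>X s t f b. consis H T r1 s t f \<and> s < f \<and> t < f \<and> s \<noteq> t \<and>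
        (\<forall>v\<in>{f..<snd (bld r1 s t f)}. effl H T (set (vars r1) \<inter> X) a v = 0) \<and>
        effl H T (set (vars r1) \<inter> X) a s = - b \<longrightarrow>
        msum L (set (vars r1) \<inter> X) (\<lambda>i. sm (a i) (c1 i)) = sm b u" by auto
  from Meet.IH(2)[of u] Meet.prems y obtain c2 where c2B: "\<forall>i\<in>set (vars r2). c2 i \<in> B i" and
    c2P: "\<forall>X s t f b. consis H T r2 s t f \<and> s < f \<and> t < f \<and> s \<noteq> t \<and>
        (\<forall>v\<in>{f..<snd (bld r2 s t f)}. effl H T (set (vars r2) \<inter> X) a v = 0) \<and>
        effl H T (set (vars r2) \<inter> X) a s = - b \<longrightarrow>
        msum L (set (vars r2) \<inter> X) (\<lambda>i. sm (a i) (c2 i)) = sm b u" by auto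
  have dis: "set (vars r1) \<inter> set (vars r2) = {}" using Meet.prems(2) by simp
  define c where "c = (\<lambda>i. if i \<in> set (vars r1) then c1 i else c2 i)"
  have cB: "\<forall>i\<in>set (vars (Meet r1 r2)). c i \<in> B i" using c1B c2B dis unfolding c_def by auto
  have cM: "c i \<in> M" if "i \<in> set (vars (Meet r1 r2))" for i
    using cB that Meet.prems(1) subM by blast
  show ?case
  proof (intro exI[of _ c] conjI allI impI)
    show "\<forall>i\<in>set (vars (Meet r1 r2)). c i \<in> B i" by (rule cB)
  next
    fix X s t f b
    assume h: "consis H T (Meet r1 r2) s t f \<and> s < f \<and> t < f \<and> s \<noteq> t \<and>
        (\<forall>v\<in>{f..<snd (bld (Meet r1 r2) s t f)}. effl H T (set (vars (Meet r1 r2)) \<inter> X) a v = 0) \<and>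
        effl H T (set (vars (Meet r1 r2)) \<inter> X) a s = - b"
    define f1 where "f1 = snd (bld r1 s t f)"
    define f2 where "f2 = snd (bld r2 s t f1)"
    have c1: "consis H T r1 s t f" and c2: "consis H T r2 s t f1"
      using h by (auto simp: consis_Meet f1_def)
    have m1: "f \<le> f1" unfolding f1_def by (rule bld_mono)
    have m2: "f1 \<le> f2" unfolding f2_def by (rule bld_mono)
    have f2e: "snd (bld (Meet r1 r2) s t f) = f2" by (simp add: bld_Meet f1_def f2_def)
    let ?E = "\<lambda>r v. effl H T (set (vars r) \<inter> X) a v"
    have split: "set (vars (Meet r1 r2)) \<inter> X = (set (vars r1) \<inter> X) \<union> (set (vars r2) \<inter> X)" by auto
    have add: "?E (Meet r1 r2) v = ?E r1 v + ?E r2 v" for v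
      using split by (simp only:) (rule effl_union, use dis in auto)
    have z2: "?E r2 v = 0" if "v \<in> {f..<f1}" for v
      using effl_outside[OF c2, of v] that h f2_def by auto
    have z1: "?E r1 v = 0" if "v \<in> {f1..<f2}" for v
      using effl_outside[OF c1, of v] that h m1 f1_def by auto
    have i1: "\<forall>v\<in>{f..<f1}. ?E r1 v = 0"
    proof
      fix v assume v: "v \<in> {f..<f1}"
      then have "v \<in> {f..<snd (bld (Meet r1 r2) s t f)}" using f2e m2 by auto
      with h have "?E (Meet r1 r2) v = 0" by blast
      with add[of v] z2[OF v] show "?E r1 v = 0" by simp
    qed
    have i2: "\<forall>v\<in>{f1..<f2}. ?E r2 v = 0"
    proof
      fix v assume v: "v \<in> {f1..<f2}"
      then have "v \<in> {f..<snd (bld (Meet r1 r2) s t f)}" using f2e m1 by auto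
      with h have "?E (Meet r1 r2) v = 0" by blast
      with add[of v] z1[OF v] show "?E r2 v = 0" by simp
    qed
    define b1 where "b1 = - ?E r1 s"
    define b2 where "b2 = - ?E r2 s"
    have "- b = ?E r1 s + ?E r2 s" using h add[of s] by simp
    then have "b = - (?E r1 s + ?E r2 s)" by (metis minus_minus)
    then have bb: "b = b1 + b2" unfolding b1_def b2_def by simp
    have s1: "msum L (set (vars r1) \<inter> X) (\<lambda>i. sm (a i) (c1 i)) = sm b1 u"
      using c1P[rule_format, of s t f X b1] c1 h i1 f1_def b1_def by auto
    have s2: "msum L (set (vars r2) \<inter> X) (\<lambda>i. sm (a i) (c2 i)) = sm b2 u"
      using c2P[rule_format, of s t f1 X b2] c2 h i2 f2_def m1 b2_def by auto
    have "msum L (set (vars (Meet r1 r2)) \<inter> X) (\<lambda>i. sm (a i) (c i)) =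
          add (msum L (set (vars r1) \<inter> X) (\<lambda>i. sm (a i) (c i))) (msum L (set (vars r2) \<inter> X) (\<lambda>i. sm (a i) (c i)))"
      unfolding split by (rule msum_union) (use dis cM sm_in in auto)
    also have "msum L (set (vars r1) \<inter> X) (\<lambda>i. sm (a i) (c i)) = msum L (set (vars r1) \<inter> X) (\<lambda>i. sm (a i) (c1 i))"
      by (rule msum_cong) (auto simp: c_def)
    also have "msum L (set (vars r2) \<inter> X) (\<lambda>i. sm (a i) (c i)) = msum L (set (vars r2) \<inter> X) (\<lambda>i. sm (a i) (c2 i))"
      by (rule msum_cong) (use dis in \<open>auto simp: c_def\<close>)
    finally show "msum L (set (vars (Meet r1 r2)) \<inter> X) (\<lambda>i. sm (a i) (c i)) = sm b u"
      using s1 s2 bb sm_addl[OF uM] by simp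
  qed
qed


lemma a21:
  assumes bal: "balanced_in p q n" and ps: "problem_solvable p q (1::'a)"
  shows "holds_in_module p q n M add z sm"
proof -
  from ps obtain a :: "nat \<Rightarrow> 'a" where sol: "is_solution p q 1 a" by (auto simp: problem_solvable_def)
  from bal have dp: "distinct (vars p)" and sp: "set (vars p) = {1..n}"
    and dq: "distinct (vars q)" and sq: "set (vars q) = {1..n}" by (auto simp: balanced_in_def)
  show ?thesis unfolding holds_in_module_def
  proof (intro allI impI subsetI)
    fix B u assume Bs: "\<forall>i\<in>{1..n}. submodule M add z sm (B i)" and u: "u \<in> lev add B p"
    have Bp: "\<forall>i\<in>set (vars p). submodule M add z sm (B i)" using Bs sp by simp
    have Bq: "\<forall>i\<in>set (vars q). submodule M add z sm (B i)" using Bs sq by simp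
    have uM: "u \<in> M" using lev_in[OF Bp] u by auto
    from plem[OF Bp dp dp subset_refl u, where H = "ehead p" and T = "etail p" and a = a]
    obtain c where cB: "\<forall>i\<in>set (vars p). c i \<in> B i" and
      cP: "\<forall>X s t f b. consis (ehead p) (etail p) p s t f \<and> s < f \<and> t < f \<and> s \<noteq> t \<and>
        (\<forall>v\<in>{f..<snd (bld p s t f)}. effl (ehead p) (etail p) (set (vars p) \<inter> X) a v = 0) \<and>
        effl (ehead p) (etail p) (set (vars p) \<inter> X) a s = - b \<longrightarrow>
        msum (vars p) (set (vars p) \<inter> X) (\<lambda>i. sm (a i) (c i)) = sm b u" by blast
    define d where "d = (\<lambda>i. sm (a i) (c i))"
    have dB: "\<forall>j\<in>set (vars q). d j \<in> B j"
    proof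
      fix j assume j: "j \<in> set (vars q)"
      then have "c j \<in> B j" "submodule M add z sm (B j)" using cB Bq sp sq by auto
      then show "d j \<in> B j" unfolding d_def submodule_def by blast
    qed
    have gnv2: "2 \<le> gnv p" unfolding gnv_def by (rule bld_mono)
    have allA: "\<forall>A\<in>spaths q. msum (vars p) A d = u"
    proof
      fix A assume A: "A \<in> spaths q"
      then have "\<exists>es. maxpath q es \<and> set es = A" using maxpath_spaths[OF dq] by blast
      with sol have eff: "\<forall>v < gnv p. Eff p a A v = Tr 1 v" by (auto simp: is_solution_def)
      have Asub: "set (vars p) \<inter> A = A" using spaths_sub[OF A] sp sq by auto
      have effl_eq: "effl (ehead p) (etail p) (set (vars p) \<inter> A) a v = Eff p a A v" for v
        unfolding Asub by (simp add: effl_def Eff_def)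
      have int: "\<forall>v\<in>{2..<snd (bld p 0 1 2)}. effl (ehead p) (etail p) (set (vars p) \<inter> A) a v = 0"
        using eff effl_eq by (auto simp: gnv_def Tr_def gsrc_def gsnk_def)
      have src: "effl (ehead p) (etail p) (set (vars p) \<inter> A) a 0 = - 1"
        using eff effl_eq gnv2 by (auto simp: Tr_def gsrc_def)
      have "msum (vars p) (set (vars p) \<inter> A) (\<lambda>i. sm (a i) (c i)) = sm 1 u"
        using cP[rule_format, of 0 1 2 A 1] consis_top[OF dp] int src by auto
      then show "msum (vars p) A d = u" using Asub sm_one[OF uM] by (simp add: d_def)
    qed
    show "u \<in> lev add B q"
      by (rule qlem[OF Bq dq dp _ dB allA]) (use sp sq in auto)
  qed
qed

end


lemma L4:
  fixes H T :: "nat \<Rightarrow> nat"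
  shows "consis H T r s t f \<Longrightarrow> (\<lambda>v. (if v = t then 1 else 0) - (if v = s then 1 else 0) :: 'a::ring_1) \<in>
    lev (\<lambda>f g v. f v + g v) (\<lambda>i. {\<lambda>v. c * ((if v = H i then 1 else 0) - (if v = T i then 1 else 0)) | c. True}) r"
proof (induction r arbitrary: s t f)
  case (Var x)
  then show ?case by (auto simp: consis_Var intro!: exI[of _ 1])
next
  case (Join r1 r2)
  let ?d = "\<lambda>t s. (\<lambda>v. (if v = t then 1 else 0) - (if v = s then 1 else 0) :: 'a)"
  have 1: "?d f s \<in> lev (\<lambda>f g v. f v + g v) (\<lambda>i. {\<lambda>v. c * ((if v = H i then 1 else 0) - (if v = T i then 1 else 0)) | c. True}) r1"
    using Join.IH(1) Join.prems by (auto simp: consis_Join)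
  have 2: "?d t f \<in> lev (\<lambda>f g v. f v + g v) (\<lambda>i. {\<lambda>v. c * ((if v = H i then 1 else 0) - (if v = T i then 1 else 0)) | c. True}) r2"
    using Join.IH(2) Join.prems by (auto simp: consis_Join)
  have e: "?d t s = (\<lambda>v. ?d f s v + ?d t f v)" by auto
  show ?case unfolding lev.simps e using 1 2 by (intro CollectI exI conjI) (rule refl)
next
  case (Meet r1 r2)
  then show ?case by (auto simp: consis_Meet)
qed

lemma L2:
  fixes u :: "nat \<Rightarrow> 'a::comm_monoid_add"
  shows "distinct (vars r) \<Longrightarrow> u \<in> lev (\<lambda>f g v. f v + g v) B r \<Longrightarrow>
    \<exists>d. (\<forall>j\<in>set (vars r). d j \<in> B j) \<and> (\<forall>A\<in>spaths r. \<forall>v. (\<Sum>j\<in>A. d j v) = u v)"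
proof (induction r arbitrary: u)
  case (Var x)
  then show ?case by (intro exI[of _ "\<lambda>_. u"]) auto
next
  case (Join r1 r2)
  from Join.prems obtain x y where u: "u = (\<lambda>v. x v + y v)" and x: "x \<in> lev (\<lambda>f g v. f v + g v) B r1"
    and y: "y \<in> lev (\<lambda>f g v. f v + g v) B r2" by auto
  from Join.IH(1)[OF _ x] Join.prems obtain d1 where d1: "\<forall>j\<in>set (vars r1). d1 j \<in> B j"
    "\<forall>A\<in>spaths r1. \<forall>v. (\<Sum>j\<in>A. d1 j v) = x v" by auto
  from Join.IH(2)[OF _ y] Join.prems obtain d2 where d2: "\<forall>j\<in>set (vars r2). d2 j \<in> B j"
    "\<forall>A\<in>spaths r2. \<forall>v. (\<Sum>j\<in>A. d2 j v) = y v" by auto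
  have dis: "set (vars r1) \<inter> set (vars r2) = {}" using Join.prems(1) by simp
  define d where "d = (\<lambda>i. if i \<in> set (vars r1) then d1 i else d2 i)"
  show ?case
  proof (intro exI[of _ d] conjI ballI allI)
    fix j assume "j \<in> set (vars (Join r1 r2))"
    then show "d j \<in> B j" using d1 d2 dis unfolding d_def by auto
  next
    fix A v assume "A \<in> spaths (Join r1 r2)"
    then obtain A1 A2 where A: "A = A1 \<union> A2" "A1 \<in> spaths r1" "A2 \<in> spaths r2" by auto
    have s1: "A1 \<subseteq> set (vars r1)" "A2 \<subseteq> set (vars r2)" using A spaths_sub by auto
    have fin: "finite A1" "finite A2" using s1 finite_subset by auto
    have "(\<Sum>j\<in>A. d j v) = (\<Sum>j\<in>A1. d j v) + (\<Sum>j\<in>A2. d j v)"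
      unfolding A(1) by (rule sum.union_disjoint) (use fin s1 dis in auto)
    also have "(\<Sum>j\<in>A1. d j v) = (\<Sum>j\<in>A1. d1 j v)" using s1
      by (intro sum.cong) (auto simp: d_def)
    also have "(\<Sum>j\<in>A2. d j v) = (\<Sum>j\<in>A2. d2 j v)" using s1 dis
      by (intro sum.cong) (auto simp: d_def)
    finally show "(\<Sum>j\<in>A. d j v) = u v" using d1 d2 A u by simp
  qed
next
  case (Meet r1 r2)
  from Meet.prems have x: "u \<in> lev (\<lambda>f g v. f v + g v) B r1" and y: "u \<in> lev (\<lambda>f g v. f v + g v) B r2" by auto
  from Meet.IH(1)[OF _ x] Meet.prems obtain d1 where d1: "\<forall>j\<in>set (vars r1). d1 j \<in> B j"
    "\<forall>A\<in>spaths r1. \<forall>v. (\<Sum>j\<in>A. d1 j v) = u v" by auto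
  from Meet.IH(2)[OF _ y] Meet.prems obtain d2 where d2: "\<forall>j\<in>set (vars r2). d2 j \<in> B j"
    "\<forall>A\<in>spaths r2. \<forall>v. (\<Sum>j\<in>A. d2 j v) = u v" by auto
  have dis: "set (vars r1) \<inter> set (vars r2) = {}" using Meet.prems(1) by simp
  define d where "d = (\<lambda>i. if i \<in> set (vars r1) then d1 i else d2 i)"
  show ?case
  proof (intro exI[of _ d] conjI ballI allI)
    fix j assume "j \<in> set (vars (Meet r1 r2))"
    then show "d j \<in> B j" using d1 d2 dis unfolding d_def by auto
  next
    fix A v assume "A \<in> spaths (Meet r1 r2)"
    then consider "A \<in> spaths r1" | "A \<in> spaths r2" by auto
    then show "(\<Sum>j\<in>A. d j v) = u v"
    proof cases
      case 1
      then have "(\<Sum>j\<in>A. d j v) = (\<Sum>j\<in>A. d1 j v)" using spaths_sub[OF 1]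
        by (intro sum.cong) (auto simp: d_def)
      then show ?thesis using d1 1 by simp
    next
      case 2
      then have "(\<Sum>j\<in>A. d j v) = (\<Sum>j\<in>A. d2 j v)" using spaths_sub[OF 2] dis
        by (intro sum.cong) (auto simp: d_def)
      then show ?thesis using d2 2 by simp
    qed
  qed
qed


lemma a12:
  assumes bal: "balanced_in p q n"
    and hyp: "\<forall>(M::(nat \<Rightarrow> 'a::ring_1) set) add z (sm :: 'a \<Rightarrow> (nat \<Rightarrow> 'a) \<Rightarrow> (nat \<Rightarrow> 'a)).
               left_module M add z sm \<longrightarrow> holds_in_module p q n M add z sm"
  shows "problem_solvable p q (1::'a)"
proof -
  from bal have dp: "distinct (vars p)" and sp: "set (vars p) = {1..n}"
    and dq: "distinct (vars q)" and sq: "set (vars q) = {1..n}" by (auto simp: balanced_in_def)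
  let ?H = "ehead p" and ?T = "etail p"
  define add0 where "add0 = (\<lambda>(f::nat \<Rightarrow> 'a) g v. f v + g v)"
  define z0 where "z0 = (\<lambda>v::nat. 0::'a)"
  define sm0 where "sm0 = (\<lambda>(r::'a) (f::nat \<Rightarrow> 'a) v. r * f v)"
  define B where "B = (\<lambda>i. {\<lambda>v. c * ((if v = ?H i then 1 else 0) - (if v = ?T i then 1 else 0)) | c::'a. True})"
  have lm: "left_module (UNIV :: (nat \<Rightarrow> 'a) set) add0 z0 sm0"
    unfolding left_module_def add0_def z0_def sm0_def
  proof (intro conjI ballI allI)
    fix x :: "nat \<Rightarrow> 'a"
    show "\<exists>y\<in>UNIV. (\<lambda>v. x v + y v) = (\<lambda>v. 0)" by (intro bexI[of _ "\<lambda>v. - x v"]) auto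
  qed (auto simp: algebra_simps)
  have subB: "submodule UNIV add0 z0 sm0 (B i)" for i
    unfolding submodule_def
  proof (intro conjI ballI allI)
    show "z0 \<in> B i" unfolding B_def z0_def by (auto intro!: exI[of _ 0])
  next
    fix x y assume "x \<in> B i" "y \<in> B i"
    then obtain c1 c2 where "x = (\<lambda>v. c1 * ((if v = ?H i then 1 else 0) - (if v = ?T i then 1 else 0)))"
      "y = (\<lambda>v. c2 * ((if v = ?H i then 1 else 0) - (if v = ?T i then 1 else 0)))" unfolding B_def by auto
    then show "add0 x y \<in> B i" unfolding B_def add0_def
      by (auto intro!: exI[of _ "c1 + c2"] simp: distrib_right)
  next
    fix r x assume "x \<in> B i"
    then obtain c1 where "x = (\<lambda>v. c1 * ((if v = ?H i then 1 else 0) - (if v = ?T i then 1 else 0)))"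
      unfolding B_def by auto
    then show "sm0 r x \<in> B i" unfolding B_def sm0_def
      by (auto intro!: exI[of _ "r * c1"] simp: mult.assoc)
  qed auto
  have hold: "holds_in_module p q n UNIV add0 z0 sm0" using hyp lm by blast
  define u0 where "u0 = (\<lambda>v::nat. (if v = 1 then 1 else 0) - (if v = 0 then 1 else 0) :: 'a)"
  have up: "u0 \<in> lev add0 B p"
    using L4[OF consis_top[OF dp], where 'a = 'a] unfolding u0_def add0_def B_def by simp
  have "lev add0 B p \<subseteq> lev add0 B q" using hold subB unfolding holds_in_module_def by blast
  with up have uq: "u0 \<in> lev add0 B q" by blast
  from L2[OF dq uq[unfolded add0_def]] obtain d where dB: "\<forall>j\<in>set (vars q). d j \<in> B j"
    and dS: "\<forall>A\<in>spaths q. \<forall>v. (\<Sum>j\<in>A. d j v) = u0 v" by blast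
  define a where "a = (\<lambda>j. SOME c. d j = (\<lambda>v. c * ((if v = ?H j then 1 else 0) - (if v = ?T j then 1 else 0))))"
  have da: "d j = (\<lambda>v. a j * ((if v = ?H j then 1 else 0) - (if v = ?T j then 1 else 0)))"
    if "j \<in> set (vars q)" for j
  proof -
    from dB that have "\<exists>c. d j = (\<lambda>v. c * ((if v = ?H j then 1 else 0) - (if v = ?T j then 1 else 0)))"
      unfolding B_def by auto
    then show ?thesis unfolding a_def by (rule someI_ex)
  qed
  have "is_solution p q 1 a"
    unfolding is_solution_def
  proof (intro allI impI)
    fix X v assume X: "\<exists>es. maxpath q es \<and> set es = X" and "v < gnv p"
    have XA: "X \<in> spaths q" using X maxpath_spaths[OF dq] by blast
    have Xs: "X \<subseteq> set (vars q)" using spaths_sub[OF XA] .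
    have fin: "finite X" using Xs finite_subset by auto
    have "(\<Sum>j\<in>X. d j v) = (\<Sum>j\<in>X. (if ?H j = v then a j else 0) - (if ?T j = v then a j else 0))"
      using Xs da by (intro sum.cong) (auto simp: right_diff_distrib)
    also have "\<dots> = (\<Sum>j\<in>X. (if ?H j = v then a j else 0)) - (\<Sum>j\<in>X. (if ?T j = v then a j else 0))"
      by (rule sum_subtractf)
    also have "\<dots> = Eff p a X v"
      unfolding Eff_def using fin by (simp add: sum.inter_filter)
    finally have "Eff p a X v = u0 v" using dS XA by simp
    then show "Eff p a X v = Tr 1 v" unfolding u0_def Tr_def gsrc_def gsnk_def by auto
  qed
  then show ?thesis unfolding problem_solvable_def by blast
qed

theorem lemma5p5:
  fixes p q :: lterm and n :: nat
  assumes "balanced_in p q n"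
  shows "(problem_solvable p q (1::'a::ring_1) \<longleftrightarrow>
            (\<forall>(M::(nat \<Rightarrow> 'a) set) add z (sm :: 'a \<Rightarrow> (nat \<Rightarrow> 'a) \<Rightarrow> (nat \<Rightarrow> 'a)).
               left_module M add z sm \<longrightarrow> holds_in_module p q n M add z sm))
       \<and> (problem_solvable p q (1::'a) \<longrightarrow>
            (\<forall>(M::'m set) add z (sm :: 'a \<Rightarrow> 'm \<Rightarrow> 'm).
               left_module M add z sm \<longrightarrow> holds_in_module p q n M add z sm))"
proof (intro conjI iffI allI impI)
  fix M :: "(nat \<Rightarrow> 'a) set" and add z and sm :: "'a \<Rightarrow> (nat \<Rightarrow> 'a) \<Rightarrow> (nat \<Rightarrow> 'a)"
  assume "problem_solvable p q (1::'a)" "left_module M add z sm"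
  then show "holds_in_module p q n M add z sm" using lmod.a21[of M add z sm p q n] assms
    by (simp add: lmod_def)
next
  assume "\<forall>(M::(nat \<Rightarrow> 'a) set) add z (sm :: 'a \<Rightarrow> (nat \<Rightarrow> 'a) \<Rightarrow> (nat \<Rightarrow> 'a)).
               left_module M add z sm \<longrightarrow> holds_in_module p q n M add z sm"
  then show "problem_solvable p q (1::'a)" using a12[OF assms] by blast
next
  fix M :: "'m set" and add z and sm :: "'a \<Rightarrow> 'm \<Rightarrow> 'm"
  assume "problem_solvable p q (1::'a)" "left_module M add z sm"
  then show "holds_in_module p q n M add z sm" using lmod.a21[of M add z sm p q n] assms
    by (simp add: lmod_def)
qed

end
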